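(* Let $K=\mathbb{Q}(\sqrt m)$ be a Deng–Li field with fundamental unit $\varepsilon$. Then: (i) The ideals $\mathfrak p^{a_0}\prod_{i=1}^n\mathfrak l_i^{a_i}$ ($a_i\in\{0,1\}$) which are principal are exactly: - $(1)$; - $\prod_{i=1}^n\mathfrak l_i=(\sqrt m)$; - $\mathfrak p\,\mathfrak l_2$; - $\mathfrak p\,\mathfrak l_1\prod_{j=3}^n\mathfrak l_j$. In particular every non-trivial relation involves $\mathfrak p$ (i.e. $a_0=1$). (ii) The ideals $(\varepsilon+1)$ and $(\varepsilon-1)$ are, up to rational factors, the two ideals $\mathfrak p\mathfrak l_2$ and $\mathfrak p\mathfrak l_1\prod_{j\ge3}\mathfrak l_j$. Moreover $\frac{\varepsilon+1}{\varepsilon-1}=C\sqrt m$ for a rational number $C$ with odd numerator and denominator. (iii) There exist a sign $s_0\in\{\pm1\}$ and $c\in\mathbb{Q}^\times$ such that $(\varepsilon+s_0)=(c)\,\mathfrak p\,\mathfrak l_2$.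
   Context: A Deng–Li field is $K=\mathbb{Q}(\sqrt m)$, $m=\ell_1\ell_2\cdots\ell_n$ with $n\ge 2$ even and $\ell_1,\dots,\ell_n$ distinct primes such that: - $\ell_1\equiv3\pmod8$; - $\ell_i\equiv5\pmod8$ for $i\ge2$; - $\big(\frac{\ell_1}{\ell_2}\big)=-1$, and $\big(\frac{\ell_1}{\ell_j}\big)=1$ for $j\ge3$; - $\big(\frac{\ell_i}{\ell_j}\big)=-1$ for $2\le i<j\le n$ (Legendre symbols). $\mathfrak p$ denotes the prime ideal of $K$ above $2$ and $\mathfrak l_i$ the prime ideal above $\ell_i$; all are ramified. The fundamental unit $\varepsilon>1$ has norm $+1$. *)

theory Defs
  imports Complex_Main "HOL-Number_Theory.Number_Theory"
begin

text \<open>Elements of Z[sqrt m] are represented as pairs (a,b) standing for a + b sqrt m.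
For a Deng--Li field m = 3 (mod 4) (indeed m = 7 mod 8), so Z[sqrt m] is the full ring of
integers O_K of K = Q(sqrt m).\<close>

definition zadd :: "int \<times> int \<Rightarrow> int \<times> int \<Rightarrow> int \<times> int" where
  "zadd x y = (fst x + fst y, snd x + snd y)"

definition zmul :: "int \<Rightarrow> int \<times> int \<Rightarrow> int \<times> int \<Rightarrow> int \<times> int" where
  "zmul m x y = (fst x * fst y + m * snd x * snd y, fst x * snd y + snd x * fst y)"

inductive_set ideal_gen :: "int \<Rightarrow> (int \<times> int) set \<Rightarrow> (int \<times> int) set"
  for m :: int and S :: "(int \<times> int) set" where
  zero: "(0, 0) \<in> ideal_gen m S"
| gen: "s \<in> S \<Longrightarrow> zmul m r s \<in> ideal_gen m S"
| add: "x \<in> ideal_gen m S \<Longrightarrow> y \<in> ideal_gen m S \<Longrightarrow> zadd x y \<in> ideal_gen m S"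

definition pideal :: "int \<Rightarrow> int \<times> int \<Rightarrow> (int \<times> int) set" where
  "pideal m \<alpha> = ideal_gen m {\<alpha>}"

definition is_principal :: "int \<Rightarrow> (int \<times> int) set \<Rightarrow> bool" where
  "is_principal m I \<longleftrightarrow> (\<exists>\<alpha>. I = pideal m \<alpha>)"

definition ideal_prod :: "int \<Rightarrow> (int \<times> int) set \<Rightarrow> (int \<times> int) set \<Rightarrow> (int \<times> int) set" where
  "ideal_prod m I J = ideal_gen m {zmul m x y | x y. x \<in> I \<and> y \<in> J}"

fun ideal_prod_list :: "int \<Rightarrow> (int \<times> int) set list \<Rightarrow> (int \<times> int) set" where
  "ideal_prod_list m [] = pideal m (1, 0)"
| "ideal_prod_list m (I # Is) = ideal_prod m I (ideal_prod_list m Is)"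

text \<open>The prime ideal above 2 (p = (2, 1 + sqrt m)) and above the prime l (l = (l, sqrt m)),
both ramified.\<close>
definition prime2 :: "int \<Rightarrow> (int \<times> int) set" where
  "prime2 m = ideal_gen m {(2, 0), (1, 1)}"

definition primeL :: "int \<Rightarrow> int \<Rightarrow> (int \<times> int) set" where
  "primeL m q = ideal_gen m {(q, 0), (0, 1)}"

definition ram_ideal :: "int \<Rightarrow> (nat \<Rightarrow> int) \<Rightarrow> nat \<Rightarrow> bool \<Rightarrow> nat set \<Rightarrow> (int \<times> int) set" where
  "ram_ideal m l n a0 A =
     ideal_prod m (if a0 then prime2 m else pideal m (1, 0))
       (ideal_prod_list m (map (\<lambda>i. primeL m (l i)) (filter (\<lambda>i. i \<in> A) [1..<n+1])))"

definition zunit :: "int \<Rightarrow> int \<Rightarrow> int \<Rightarrow> bool" where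
  "zunit m x y \<longleftrightarrow> x^2 - m * y^2 = 1 \<or> x^2 - m * y^2 = -1"

definition fund_unit :: "int \<Rightarrow> int \<Rightarrow> int \<Rightarrow> bool" where
  "fund_unit m x y \<longleftrightarrow> zunit m x y \<and> x + y * sqrt (real_of_int m) > 1 \<and>
     (\<forall>u v. zunit m u v \<and> u + v * sqrt (real_of_int m) > 1 \<longrightarrow>
            x + y * sqrt (real_of_int m) \<le> u + v * sqrt (real_of_int m))"

definition deng_li :: "nat \<Rightarrow> (nat \<Rightarrow> int) \<Rightarrow> int \<Rightarrow> bool" where
  "deng_li n l m \<longleftrightarrow>
     n \<ge> 2 \<and> even n \<and>
     (\<forall>i\<in>{1..n}. prime (l i)) \<and> inj_on l {1..n} \<and>
     m = (\<Prod>i\<in>{1..n}. l i) \<and>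
     [l 1 = 3] (mod 8) \<and>
     (\<forall>i\<in>{2..n}. [l i = 5] (mod 8)) \<and>
     Legendre (l 1) (l 2) = -1 \<and>
     (\<forall>j\<in>{3..n}. Legendre (l 1) (l j) = 1) \<and>
     (\<forall>i j. 2 \<le> i \<and> i < j \<and> j \<le> n \<longrightarrow> Legendre (l i) (l j) = -1)"

end

theory Submission
  imports Defs "HOL-Computational_Algebra.Nth_Powers"
begin

definition closedI :: "int \<Rightarrow> (int \<times> int) set \<Rightarrow> bool" where
  "closedI m T \<longleftrightarrow> (0,0) \<in> T \<and> (\<forall>x y. x \<in> T \<longrightarrow> y \<in> T \<longrightarrow> zadd x y \<in> T)
     \<and> (\<forall>r x. x \<in> T \<longrightarrow> zmul m r x \<in> T)"

definition Iset :: "int \<Rightarrow> int \<Rightarrow> bool \<Rightarrow> (int \<times> int) set" where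
  "Iset m D a0 = {(a,c). D dvd a \<and> (a0 \<longrightarrow> even (a - c))}"

lemma zmul_assoc: "zmul m r (zmul m r' s) = zmul m (zmul m r r') s"
  by (simp add: zmul_def algebra_simps)
lemma zmul_comm: "zmul m r s = zmul m s r"
  by (simp add: zmul_def algebra_simps)
lemma zmul_zadd: "zmul m r (zadd x y) = zadd (zmul m r x) (zmul m r y)"
  by (simp add: zmul_def zadd_def algebra_simps)
lemma zadd_zmul: "zmul m (zadd x y) r = zadd (zmul m x r) (zmul m y r)"
  by (simp add: zmul_def zadd_def algebra_simps)

lemma ideal_gen_mult: "x \<in> ideal_gen m S \<Longrightarrow> zmul m r x \<in> ideal_gen m S"
proof (induction x arbitrary: r rule: ideal_gen.induct)
  case zero
  then show ?case using ideal_gen.zero by (simp add: zmul_def)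
next
  case (gen s r')
  then show ?case by (simp add: zmul_assoc ideal_gen.gen)
next
  case (add x y)
  then show ?case by (simp add: zmul_zadd ideal_gen.add)
qed

lemma closedI_ideal_gen: "closedI m (ideal_gen m S)"
  unfolding closedI_def using ideal_gen.zero ideal_gen.add ideal_gen_mult by blast

lemma ideal_gen_least: "closedI m T \<Longrightarrow> S \<subseteq> T \<Longrightarrow> ideal_gen m S \<subseteq> T"
proof
  fix x assume c: "closedI m T" and s: "S \<subseteq> T" and "x \<in> ideal_gen m S"
  from \<open>x \<in> ideal_gen m S\<close> show "x \<in> T"
    by (induction x rule: ideal_gen.induct) (use c s in \<open>auto simp: closedI_def\<close>)
qed

lemma zmul_one: "zmul m (1,0) s = s"
  by (simp add: zmul_def)

lemma ideal_gen_base: "s \<in> S \<Longrightarrow> s \<in> ideal_gen m S"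
  using ideal_gen.gen[of s S m "(1,0)"] by (simp add: zmul_one)

lemma pideal_eq: "pideal m \<alpha> = range (\<lambda>r. zmul m r \<alpha>)"
proof
  show "pideal m \<alpha> \<subseteq> range (\<lambda>r. zmul m r \<alpha>)"
    unfolding pideal_def
  proof (rule ideal_gen_least)
    show "closedI m (range (\<lambda>r. zmul m r \<alpha>))"
      unfolding closedI_def
    proof (intro conjI allI impI)
      show "(0,0) \<in> range (\<lambda>r. zmul m r \<alpha>)"
        by (rule range_eqI[of _ _ "(0,0)"]) (simp add: zmul_def)
    next
      fix x y assume "x \<in> range (\<lambda>r. zmul m r \<alpha>)" "y \<in> range (\<lambda>r. zmul m r \<alpha>)"
      then obtain a b where "x = zmul m a \<alpha>" "y = zmul m b \<alpha>" by auto
      then show "zadd x y \<in> range (\<lambda>r. zmul m r \<alpha>)"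
        by (intro range_eqI[of _ _ "zadd a b"]) (simp add: zadd_zmul)
    next
      fix r x assume "x \<in> range (\<lambda>r. zmul m r \<alpha>)"
      then obtain a where "x = zmul m a \<alpha>" by auto
      then show "zmul m r x \<in> range (\<lambda>r. zmul m r \<alpha>)"
        by (intro range_eqI[of _ _ "zmul m r a"]) (simp add: zmul_assoc)
    qed
  qed (simp, rule range_eqI[of _ _ "(1,0)"], simp add: zmul_one)
next
  show "range (\<lambda>r. zmul m r \<alpha>) \<subseteq> pideal m \<alpha>"
    unfolding pideal_def using ideal_gen.gen by blast
qed

lemma Iset_closed: assumes "D dvd m" "a0 \<longrightarrow> odd m" shows "closedI m (Iset m D a0)"
  unfolding closedI_def Iset_def
proof (intro conjI allI impI)
  fix x y :: "int \<times> int"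
  assume "x \<in> {(a, c). D dvd a \<and> (a0 \<longrightarrow> even (a - c))}" "y \<in> {(a, c). D dvd a \<and> (a0 \<longrightarrow> even (a - c))}"
  then show "zadd x y \<in> {(a, c). D dvd a \<and> (a0 \<longrightarrow> even (a - c))}"
    by (cases x; cases y) (auto simp: zadd_def)
next
  fix r x :: "int \<times> int"
  assume x: "x \<in> {(a, c). D dvd a \<and> (a0 \<longrightarrow> even (a - c))}"
  obtain a c where xe: "x = (a,c)" by (cases x)
  obtain r1 r2 where re: "r = (r1,r2)" by (cases r)
  have Da: "D dvd a" using x xe by auto
  have "D dvd r1 * a + m * r2 * c" using Da assms(1) by simp
  moreover have "a0 \<longrightarrow> even ((r1 * a + m * r2 * c) - (r1 * c + r2 * a))"
  proof
    assume a0: a0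
    then have "even (a - c)" "odd m" using x xe assms by auto
    have e: "(r1 * a + m * r2 * c) - (r1 * c + r2 * a) = r1*(a-c) + r2*((m-1)*c) - r2*(a-c)"
      by (simp add: algebra_simps)
    have "even (m-1)" using \<open>odd m\<close> by simp
    then show "even ((r1 * a + m * r2 * c) - (r1 * c + r2 * a))" unfolding e using \<open>even (a-c)\<close> by simp
  qed
  ultimately show "zmul m r x \<in> {(a, c). D dvd a \<and> (a0 \<longrightarrow> even (a - c))}"
    using xe re by (simp add: zmul_def)
qed (simp)

lemma prod_least: "closedI m T \<Longrightarrow> (\<And>x y. x\<in>I \<Longrightarrow> y\<in>J \<Longrightarrow> zmul m x y \<in> T) \<Longrightarrow> ideal_prod m I J \<subseteq> T"
  unfolding ideal_prod_def by (rule ideal_gen_least) auto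

lemma prod_mem: "x\<in>I \<Longrightarrow> y\<in>J \<Longrightarrow> zmul m x y \<in> ideal_prod m I J"
  unfolding ideal_prod_def by (rule ideal_gen_base) blast

lemma closedI_prod: "closedI m (ideal_prod m I J)"
  unfolding ideal_prod_def by (rule closedI_ideal_gen)

lemma closedI_D: assumes "closedI m T"
  shows "x \<in> T \<Longrightarrow> y \<in> T \<Longrightarrow> zadd x y \<in> T" "x \<in> T \<Longrightarrow> zmul m r x \<in> T"
  using assms unfolding closedI_def by blast+

lemma primeL_eq: assumes "q dvd m" shows "primeL m q = Iset m q False"
proof
  show "primeL m q \<subseteq> Iset m q False" unfolding primeL_def
    by (rule ideal_gen_least) (use Iset_closed[of q m False] assms in \<open>auto simp: Iset_def\<close>)
next
  show "Iset m q False \<subseteq> primeL m q"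
  proof
    fix x assume "x \<in> Iset m q False"
    then obtain a c k where x: "x = (a,c)" "a = q*k" by (auto simp: Iset_def elim!: dvdE)
    have c: "closedI m (primeL m q)" unfolding primeL_def by (rule closedI_ideal_gen)
    have g1: "(q,0) \<in> primeL m q" "(0,1) \<in> primeL m q" unfolding primeL_def
      by (auto intro: ideal_gen_base)
    have "zadd (zmul m (k,0) (q,0)) (zmul m (c,0) (0,1)) \<in> primeL m q"
      using closedI_D[OF c] g1 by blast
    moreover have "zadd (zmul m (k,0) (q,0)) (zmul m (c,0) (0,1)) = x"
      using x by (simp add: zadd_def zmul_def)
    ultimately show "x \<in> primeL m q" by simp
  qed
qed

lemma prime2_eq: assumes "odd m" shows "prime2 m = Iset m 1 True"
proof
  show "prime2 m \<subseteq> Iset m 1 True" unfolding prime2_def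
    by (rule ideal_gen_least) (use Iset_closed[of 1 m True] assms in \<open>auto simp: Iset_def\<close>)
next
  show "Iset m 1 True \<subseteq> prime2 m"
  proof
    fix x assume "x \<in> Iset m 1 True"
    then obtain a c where x0: "x = (a,c)" "even (a - c)" by (cases x) (auto simp: Iset_def)
    from x0(2) obtain k where "a - c = 2*k" by (rule evenE)
    with x0 have x: "x = (a,c)" "a - c = 2*k" by auto
    have c: "closedI m (prime2 m)" unfolding prime2_def by (rule closedI_ideal_gen)
    have g1: "(2,0) \<in> prime2 m" "(1,1) \<in> prime2 m" unfolding prime2_def
      by (auto intro: ideal_gen_base)
    have "zadd (zmul m (c,0) (1,1)) (zmul m (k,0) (2,0)) \<in> prime2 m"
      using closedI_D[OF c] g1 by blast
    moreover have "zadd (zmul m (c,0) (1,1)) (zmul m (k,0) (2,0)) = x"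
      using x by (simp add: zadd_def zmul_def algebra_simps)
    ultimately show "x \<in> prime2 m" by simp
  qed
qed

lemma pideal_one: "pideal m (1,0) = UNIV"
proof -
  have h: "x = zmul m x (1,0)" for x by (cases x) (simp add: zmul_def)
  show ?thesis unfolding pideal_eq using h by blast
qed

lemma Iset_one_UNIV: "Iset m 1 False = UNIV"
  by (auto simp: Iset_def)

lemma prod_UNIV: assumes "closedI m J" shows "ideal_prod m UNIV J = J"
proof
  show "ideal_prod m UNIV J \<subseteq> J" by (rule prod_least[OF assms]) (use closedI_D[OF assms] in auto)
next
  show "J \<subseteq> ideal_prod m UNIV J"
  proof
    fix y assume "y \<in> J"
    then have "zmul m (1,0) y \<in> ideal_prod m UNIV J" by (intro prod_mem) auto
    then show "y \<in> ideal_prod m UNIV J" by (simp add: zmul_one)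
  qed
qed

lemma prodL: assumes cop: "coprime q D" and dv: "q*D dvd m"
  shows "ideal_prod m (Iset m q False) (Iset m D False) = Iset m (q*D) False"
proof
  show "ideal_prod m (Iset m q False) (Iset m D False) \<subseteq> Iset m (q*D) False"
  proof (rule prod_least[OF Iset_closed[OF dv]])
    fix x y assume x: "x \<in> Iset m q False" and y: "y \<in> Iset m D False"
    obtain a b c e where xy: "x = (a,b)" "y = (c,e)" by (cases x, cases y)
    have "q*D dvd a*c" using x y xy by (auto simp: Iset_def intro: mult_dvd_mono)
    moreover have "q*D dvd m*b*e" using dv by simp
    ultimately show "zmul m x y \<in> Iset m (q * D) False" using xy by (simp add: zmul_def Iset_def)
  qed simp
next
  let ?P = "ideal_prod m (Iset m q False) (Iset m D False)"
  have c: "closedI m ?P" by (rule closedI_prod)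
  show "Iset m (q*D) False \<subseteq> ?P"
  proof
    fix x assume "x \<in> Iset m (q*D) False"
    then obtain a c k where x: "x = (a,c)" "a = q*D*k" by (auto simp: Iset_def elim!: dvdE)
    have m1: "(q*D,0) \<in> ?P" using prod_mem[of "(q,0)" "Iset m q False" "(D,0)" "Iset m D False" m]
      by (simp add: Iset_def zmul_def)
    have m2: "(0,q) \<in> ?P" using prod_mem[of "(q,0)" "Iset m q False" "(0,1)" "Iset m D False" m]
      by (simp add: Iset_def zmul_def)
    have m3: "(0,D) \<in> ?P" using prod_mem[of "(0,1)" "Iset m q False" "(D,0)" "Iset m D False" m]
      by (simp add: Iset_def zmul_def)
    obtain u v where uv: "u*q + v*D = 1" using bezout_int[of q D] cop by auto
    have "zadd (zmul m (u,0) (0,q)) (zmul m (v,0) (0,D)) \<in> ?P"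
      using closedI_D[OF c] m2 m3 by blast
    moreover have "zadd (zmul m (u,0) (0,q)) (zmul m (v,0) (0,D)) = (0,1)"
      using uv by (simp add: zadd_def zmul_def)
    ultimately have m4: "(0,1) \<in> ?P" by simp
    have "zadd (zmul m (k,0) (q*D,0)) (zmul m (c,0) (0,1)) \<in> ?P"
      using closedI_D[OF c] m1 m4 by blast
    moreover have "zadd (zmul m (k,0) (q*D,0)) (zmul m (c,0) (0,1)) = x"
      using x by (simp add: zadd_def zmul_def algebra_simps)
    ultimately show "x \<in> ?P" by simp
  qed
qed

lemma prod2: assumes om: "odd m" and dv: "D dvd m"
  shows "ideal_prod m (Iset m 1 True) (Iset m D False) = Iset m D True"
proof
  show "ideal_prod m (Iset m 1 True) (Iset m D False) \<subseteq> Iset m D True"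
  proof (rule prod_least[OF Iset_closed])
    fix x y assume x: "x \<in> Iset m 1 True" and y: "y \<in> Iset m D False"
    obtain a b c e where xy: "x = (a,b)" "y = (c,e)" by (cases x, cases y)
    have "D dvd a*c" using y xy by (auto simp: Iset_def)
    moreover have "D dvd m*b*e" using dv by simp
    moreover have "even ((a*c + m*b*e) - (a*e + b*c))"
    proof -
      have e: "(a*c + m*b*e) - (a*e + b*c) = (a-b)*(c-e) + (m-1)*b*e" by (simp add: algebra_simps)
      have "even (a-b)" using x xy by (simp add: Iset_def)
      moreover have "even (m-1)" using om by simp
      ultimately show ?thesis unfolding e by simp
    qed
    ultimately show "zmul m x y \<in> Iset m D True" using xy by (simp add: zmul_def Iset_def)
  qed (use dv om in auto)
next
  let ?P = "ideal_prod m (Iset m 1 True) (Iset m D False)"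
  have c: "closedI m ?P" by (rule closedI_prod)
  show "Iset m D True \<subseteq> ?P"
  proof
    fix x assume "x \<in> Iset m D True"
    then obtain a c where x0: "x = (a,c)" "D dvd a" "even (a - c)" by (cases x) (auto simp: Iset_def)
    from x0(3) obtain i where x2: "a - c = 2*i" by (rule evenE)
    from x0(2) obtain k where "a = D*k" by (rule dvdE)
    with x2 have x1: "a = D*k" "a - c = 2*i" by auto
    define j where "j = -i"
    have x: "x = (a,c)" "a = D*k" "c - a = 2*j" using x0 x1 j_def by auto
    have m1: "(D,D) \<in> ?P" using prod_mem[of "(1,1)" "Iset m 1 True" "(D,0)" "Iset m D False" m]
      by (simp add: Iset_def zmul_def)
    have m2: "(0,2) \<in> ?P" using prod_mem[of "(2,0)" "Iset m 1 True" "(0,1)" "Iset m D False" m]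
      by (simp add: Iset_def zmul_def)
    have "zadd (zmul m (k,0) (D,D)) (zmul m (j,0) (0,2)) \<in> ?P"
      using closedI_D[OF c] m1 m2 by blast
    moreover have "zadd (zmul m (k,0) (D,D)) (zmul m (j,0) (0,2)) = x"
      using x by (simp add: zadd_def zmul_def algebra_simps)
    ultimately show "x \<in> ?P" by simp
  qed
qed

lemma prodlist:
  assumes "distinct xs" "\<forall>i\<in>set xs. prime (L i)" "inj_on L (set xs)" "(\<Prod>i\<in>set xs. L i) dvd m"
  shows "ideal_prod_list m (map (\<lambda>i. primeL m (L i)) xs) = Iset m (\<Prod>i\<in>set xs. L i) False"
  using assms
proof (induction xs)
  case Nil
  then show ?case by (simp add: pideal_one Iset_one_UNIV)
next
  case (Cons i xs)
  have ni: "i \<notin> set xs" using Cons by simp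
  have pe: "(\<Prod>j\<in>set (i#xs). L j) = L i * (\<Prod>j\<in>set xs. L j)" using ni by simp
  have dvm: "L i * (\<Prod>j\<in>set xs. L j) dvd m" using Cons.prems(4) pe by simp
  have IH: "ideal_prod_list m (map (\<lambda>i. primeL m (L i)) xs) = Iset m (\<Prod>i\<in>set xs. L i) False"
    apply (rule Cons.IH)
    using Cons.prems dvm by (auto simp: inj_on_def intro: dvd_mult_right)
  have Li: "primeL m (L i) = Iset m (L i) False"
    by (rule primeL_eq) (use dvm in \<open>auto intro: dvd_mult_left\<close>)
  have cop: "coprime (L i) (\<Prod>j\<in>set xs. L j)"
  proof (rule prod_coprime_right)
    fix j assume "j \<in> set xs"
    then have "L i \<noteq> L j" "prime (L i)" "prime (L j)" using Cons.prems ni by (auto simp: inj_on_def)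
    then show "coprime (L i) (L j)" by (rule primes_coprime[rotated 2]) 
  qed
  have "ideal_prod_list m (map (\<lambda>i. primeL m (L i)) (i#xs)) = ideal_prod m (Iset m (L i) False) (Iset m (\<Prod>j\<in>set xs. L j) False)"
    by (simp add: IH Li)
  also have "\<dots> = Iset m (L i * (\<Prod>j\<in>set xs. L j)) False" by (rule prodL[OF cop dvm])
  finally show ?case unfolding pe .
qed

definition nrm :: "int \<Rightarrow> int \<times> int \<Rightarrow> int" where
  "nrm m x = (fst x)^2 - m * (snd x)^2"

lemma nrm_mult: "nrm m (zmul m r s) = nrm m r * nrm m s"
  by (simp add: nrm_def zmul_def power2_eq_square algebra_simps)

lemma pideal_mem: "x \<in> pideal m \<alpha> \<longleftrightarrow> (\<exists>r. x = zmul m r \<alpha>)"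
  by (auto simp: pideal_eq)

lemma Iset_pideal:
  assumes DE: "D*E = m" and oD: "odd D" and oE: "odd E" and sg: "\<sigma> = 1 \<or> \<sigma> = -1"
    and eq: "D*U^2 - E*V^2 = \<sigma> * (if a0 then 2 else 1)"
  shows "Iset m D a0 = pideal m (D*U, V)"
proof -
  define t :: int where "t = (if a0 then 2 else 1)"
  have om: "odd m" using DE oD oE by auto
  have Dm: "D dvd m" using DE by auto
  have par: "a0 \<longrightarrow> even (D*U - V)"
  proof
    assume a0
    then have "even (D*U^2 - E*V^2)" using eq by simp
    then have "even U \<longleftrightarrow> even V" using oD oE by (simp add: even_diff)
    then show "even (D*U - V)" using oD by (simp add: even_diff)
  qed
  have amem: "(D*U, V) \<in> Iset m D a0" using par by (simp add: Iset_def)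
  have c: "closedI m (Iset m D a0)" by (rule Iset_closed) (use Dm om in auto)
  show ?thesis
  proof
    show "pideal m (D * U, V) \<subseteq> Iset m D a0"
      using closedI_D(2)[OF c amem] by (auto simp: pideal_eq)
  next
    show "Iset m D a0 \<subseteq> pideal m (D * U, V)"
    proof
      fix x assume xI: "x \<in> Iset m D a0"
      obtain a c where x: "x = (a,c)" by (cases x)
      have Da: "D dvd a" using xI x by (simp add: Iset_def)
      define X where "X = a*D*U - m*c*V"
      define Y where "Y = c*D*U - a*V"
      have dX: "D dvd X" using Da Dm unfolding X_def by simp
      have dY: "D dvd Y" using Da unfolding Y_def by simp
      have tX: "D*t dvd X \<and> D*t dvd Y"
      proof (cases a0)
        case False then show ?thesis using dX dY by (simp add: t_def)
      next
        case True
        have eac: "even (a - c)" using xI x True by (simp add: Iset_def)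
        have eUV: "even (D*U - V)" using par True by simp
        have "even X" "even Y" using eac eUV om oD unfolding X_def Y_def
          by (auto simp: even_diff)
        moreover have "coprime D 2" using oD by (simp add: coprime_commute)
        ultimately show ?thesis using dX dY True by (simp add: t_def divides_mult)
      qed
      then obtain k1 k2 where k: "X = D*t*k1" "Y = D*t*k2" by (auto elim!: dvdE)
      have Dt: "D*t \<noteq> 0" using oD by (auto simp: t_def)
      have s2: "\<sigma>*\<sigma> = 1" using sg by auto
      have eq': "D*U^2 - E*V^2 = \<sigma>*t" using eq by (simp add: t_def)
      have e1: "D*t*(\<sigma>*k1*(D*U) + m*(\<sigma>*k2)*V) = D*t*a"
      proof -
        have "D*t*(\<sigma>*k1*(D*U) + m*(\<sigma>*k2)*V) = \<sigma>*(X*(D*U) + m*Y*V)" using k by (simp add: algebra_simps)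
        also have "\<dots> = \<sigma>*a*D*(D*U^2 - E*V^2)" unfolding X_def Y_def using DE[symmetric]
          by (simp add: algebra_simps power2_eq_square)
        also have "\<dots> = (\<sigma>*\<sigma>)*D*t*a" using eq' by (simp add: algebra_simps)
        finally show ?thesis using s2 by simp
      qed
      have e2: "D*t*(\<sigma>*k1*V + \<sigma>*k2*(D*U)) = D*t*c"
      proof -
        have "D*t*(\<sigma>*k1*V + \<sigma>*k2*(D*U)) = \<sigma>*(X*V + Y*(D*U))" using k by (simp add: algebra_simps)
        also have "\<dots> = \<sigma>*c*D*(D*U^2 - E*V^2)" unfolding X_def Y_def using DE[symmetric]
          by (simp add: algebra_simps power2_eq_square)
        also have "\<dots> = (\<sigma>*\<sigma>)*D*t*c" using eq' by (simp add: algebra_simps)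
        finally show ?thesis using s2 by simp
      qed
      have "zmul m (\<sigma>*k1, \<sigma>*k2) (D*U, V) = x"
        using e1 e2 Dt x by (simp add: zmul_def)
      then show "x \<in> pideal m (D * U, V)" unfolding pideal_mem by blast
    qed
  qed
qed

lemma mod4_lemma: fixes D E :: int assumes "odd D" "odd E" "(D*E) mod 4 = 3" shows "(D - E) mod 4 = 2"
proof -
  have d: "D mod 4 = 1 \<or> D mod 4 = 3" using assms(1) by presburger
  have e: "E mod 4 = 1 \<or> E mod 4 = 3" using assms(2) by presburger
  have "(D*E) mod 4 = ((D mod 4)*(E mod 4)) mod 4" by (simp add: mod_mult_eq)
  moreover have "(D - E) mod 4 = ((D mod 4) - (E mod 4)) mod 4" by (simp add: mod_diff_eq)
  ultimately show ?thesis using d e assms(3) by auto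
qed

lemma principal_imp:
  assumes DE: "D*E = m" and oD: "odd D" and oE: "odd E" and cop: "coprime D E"
    and m4: "m mod 4 = 3"
    and pr: "is_principal m (Iset m D a0)"
  shows "\<exists>U V \<sigma>. (\<sigma> = 1 \<or> \<sigma> = -1) \<and> D*U^2 - E*V^2 = \<sigma> * (if a0 then 2 else 1)"
proof -
  obtain \<alpha> where I: "Iset m D a0 = pideal m \<alpha>" using pr by (auto simp: is_principal_def)
  obtain u v where al: "\<alpha> = (u,v)" by (cases \<alpha>)
  have "\<alpha> \<in> pideal m \<alpha>" unfolding pideal_mem by (rule exI[of _ "(1,0)"]) (simp add: zmul_one)
  then have aI: "(u,v) \<in> Iset m D a0" using I al by simp
  then obtain U where u: "u = D*U" by (auto simp: Iset_def elim!: dvdE)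
  define K where "K = D*U^2 - E*v^2"
  have Nal: "nrm m \<alpha> = D*K" unfolding K_def al nrm_def u using DE[symmetric]
    by (simp add: algebra_simps power2_eq_square)
  have Dnz: "D \<noteq> 0" using oD by auto
  have key: "\<exists>r. nrm m x = nrm m r * (D*K)" if "x \<in> Iset m D a0" for x
  proof -
    from that I have "\<exists>r. x = zmul m r \<alpha>" by (simp add: pideal_mem)
    then obtain r where "x = zmul m r \<alpha>" by blast
    then show ?thesis using nrm_mult Nal by metis
  qed
  show ?thesis
  proof (cases a0)
    case False
    have "(D,0) \<in> Iset m D a0" using False by (simp add: Iset_def)
    from key[OF this] obtain r where "nrm m (D,0) = nrm m r * (D*K)" by blast
    then have "D^2 = nrm m r * (D*K)" by (simp add: nrm_def)
    then have "D*D = D*(nrm m r * K)" by (simp add: power2_eq_square algebra_simps)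
    then have "D = nrm m r * K" using mult_left_cancel[OF Dnz] by blast
    then have KD: "K dvd D" by simp
    have "(0,1) \<in> Iset m D a0" using False by (simp add: Iset_def)
    from key[OF this] obtain r where "nrm m (0,1) = nrm m r * (D*K)" by blast
    then have "- m = nrm m r * (D*K)" by (simp add: nrm_def)
    then have "D*(-E) = D*(nrm m r * K)" using DE by (simp add: algebra_simps)
    then have "-E = nrm m r * K" using mult_left_cancel[OF Dnz] by blast
    then have KE: "K dvd E" by (metis dvd_minus_iff dvd_triv_right)
    have "is_unit K" using coprime_common_divisor[OF cop KD KE] .
    then have "K = 1 \<or> K = -1" by auto
    then show ?thesis using False K_def by auto
  next
    case True
    have "(2*D,0) \<in> Iset m D a0" using True by (simp add: Iset_def)
    from key[OF this] obtain r where "nrm m (2*D,0) = nrm m r * (D*K)" by blast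
    then have "(2*D)^2 = nrm m r * (D*K)" by (simp add: nrm_def)
    then have "D*(4*D) = D*(nrm m r * K)" by (simp add: power2_eq_square algebra_simps)
    then have "4*D = nrm m r * K" using mult_left_cancel[OF Dnz] by blast
    then have K1: "K dvd 4*D" by (metis dvd_triv_right)
    have "(0,2) \<in> Iset m D a0" using True by (simp add: Iset_def)
    from key[OF this] obtain r where "nrm m (0,2) = nrm m r * (D*K)" by blast
    then have "- (m*4) = nrm m r * (D*K)" by (simp add: nrm_def)
    then have "D*(-(4*E)) = D*(nrm m r * K)" using DE by (simp add: algebra_simps)
    then have "-(4*E) = nrm m r * K" using mult_left_cancel[OF Dnz] by blast
    then have K2: "K dvd 4*E" by (metis dvd_minus_iff dvd_triv_right)
    obtain a b where ab: "a*D + b*E = 1" using bezout_int[of D E] cop by auto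
    have "4 = a*(4*D) + b*(4*E)" using ab by (simp add: algebra_simps)
    then have K4: "K dvd 4" using K1 K2 by (metis dvd_add dvd_mult)
    have "(D,1) \<in> Iset m D a0" using True oD by (simp add: Iset_def)
    from key[OF this] obtain r where "nrm m (D,1) = nrm m r * (D*K)" by blast
    then have "D^2 - m = nrm m r * (D*K)" by (simp add: nrm_def)
    then have "D*(D - E) = D*(nrm m r * K)" using DE by (simp add: algebra_simps power2_eq_square)
    then have "D - E = nrm m r * K" using mult_left_cancel[OF Dnz] by blast
    then have K3: "K dvd D - E" by (metis dvd_triv_right)
    have DE4: "(D - E) mod 4 = 2" using mod4_lemma[OF oD oE] DE m4 by simp
    have "even (u - v)" using aI True by (simp add: Iset_def)
    moreover have "odd m" using DE oD oE by auto
    ultimately have "even (nrm m \<alpha>)" unfolding al nrm_def by (auto simp: even_diff)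
    then have Ke: "even K" using Nal oD by simp
    have "K \<noteq> 0" using K4 by auto
    have "\<bar>K\<bar> \<le> 4" using dvd_imp_le_int[of 4 K] K4 by simp
    then have "K \<in> {-4,-3,-2,-1,0,1,2,3,4}" by auto
    moreover have "\<not> (4::int) dvd D - E" using DE4 by auto
    moreover have "\<not> (-4::int) dvd D - E" using DE4 by auto
    ultimately have "K = 2 \<or> K = -2" using Ke K3 \<open>K \<noteq> 0\<close> by fastforce
    then show ?thesis using True K_def by (intro exI[of _ U] exI[of _ v] exI[of _ "K div 2"]) auto
  qed
qed

lemma Leg_val: "\<not> [a = 0] (mod p) \<Longrightarrow> Legendre a p = 1 \<or> Legendre a p = -1"
  by (auto simp: Legendre_def)

lemma Leg_zero: "[a = 0] (mod p) \<Longrightarrow> Legendre a p = 0"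
  by (auto simp: Legendre_def)

lemma euler_int: assumes "prime p" "2 < p"
  shows "[Legendre a p = a ^ nat ((p - 1) div 2)] (mod p)"
proof -
  have pn: "prime (nat p)" "2 < nat p" using assms by auto
  have "int (nat p) = p" using assms by auto
  moreover have "(nat p - 1) div 2 = nat ((p-1) div 2)" using assms by (simp add: nat_diff_distrib nat_div_distrib)
  ultimately show ?thesis using euler_criterion[OF pn, of a] by simp
qed

lemma cong_pm1: fixes p x y :: int assumes "prime p" "2 < p" "x = 1 \<or> x = -1" "y = 1 \<or> y = -1" "[x = y] (mod p)"
  shows "x = y"
proof (rule ccontr)
  assume "x \<noteq> y"
  then have "[1 = -1] (mod p)" using assms cong_sym by auto
  then have "p dvd 2" by (simp add: cong_iff_dvd_diff)
  then have "p \<le> 2" using zdvd_imp_le[of p 2] by simp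
  then show False using assms(2) by simp
qed

lemma Leg_mult: assumes p: "prime p" "2 < p"
  shows "Legendre (a*b) p = Legendre a p * Legendre b p"
proof (cases "[a = 0] (mod p) \<or> [b = 0] (mod p)")
  case True
  then have "[a*b = 0] (mod p)" by (auto simp: cong_0_iff)
  then show ?thesis using True by (auto simp: Leg_zero)
next
  case False
  then have ab: "\<not> [a*b = 0] (mod p)" using p by (auto simp: cong_0_iff prime_dvd_mult_iff)
  have "[Legendre (a*b) p = (a*b) ^ nat ((p - 1) div 2)] (mod p)" by (rule euler_int[OF p])
  moreover have "[Legendre a p * Legendre b p = a ^ nat ((p - 1) div 2) * b ^ nat ((p - 1) div 2)] (mod p)"
    using euler_int[OF p, of a] euler_int[OF p, of b] by (rule cong_mult)
  ultimately have "[Legendre (a*b) p = Legendre a p * Legendre b p] (mod p)"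
    by (metis cong_sym cong_trans power_mult_distrib)
  moreover have "Legendre a p * Legendre b p = 1 \<or> Legendre a p * Legendre b p = -1"
    using Leg_val[of a p] Leg_val[of b p] False by auto
  ultimately show ?thesis using cong_pm1[OF p] Leg_val[OF ab] by blast
qed

lemma Leg_one: assumes "prime p" shows "Legendre 1 p = 1"
proof -
  have "\<not> [1 = 0] (mod p)" using assms by (auto simp: cong_0_iff)
  moreover have "QuadRes p 1" unfolding QuadRes_def by (rule exI[of _ 1]) simp
  ultimately show ?thesis by (simp add: Legendre_def)
qed

lemma Leg_prod: assumes p: "prime p" "2 < p" and "finite S"
  shows "Legendre (\<Prod>i\<in>S. f i) p = (\<Prod>i\<in>S. Legendre (f i) p)"
  using assms(3) by (induction S rule: finite_induct) (simp_all add: Leg_one[OF p(1)] Leg_mult[OF p])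

lemma Leg_minus1: assumes p: "prime p" "2 < p"
  shows "p mod 4 = 1 \<Longrightarrow> Legendre (-1) p = 1" "p mod 4 = 3 \<Longrightarrow> Legendre (-1) p = -1"
proof -
  have nz: "\<not> [-1 = 0] (mod p)" using p by (auto simp: cong_0_iff)
  have e: "[Legendre (-1) p = (-1) ^ nat ((p - 1) div 2)] (mod p)" by (rule euler_int[OF p])
  show "p mod 4 = 1 \<Longrightarrow> Legendre (-1) p = 1"
  proof -
    assume "p mod 4 = 1"
    then have "even ((p - 1) div 2)" by presburger
    then have "even (nat ((p - 1) div 2))" using even_nat_iff[of "(p-1) div 2"] p by simp
    then have "[Legendre (-1) p = 1] (mod p)" using e by simp
    then show ?thesis using cong_pm1[OF p] Leg_val[OF nz] by blast
  qed
  show "p mod 4 = 3 \<Longrightarrow> Legendre (-1) p = -1"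
  proof -
    assume "p mod 4 = 3"
    then have "odd ((p - 1) div 2)" by presburger
    then have "odd (nat ((p - 1) div 2))" using even_nat_iff[of "(p-1) div 2"] p by simp
    then have "[Legendre (-1) p = -1] (mod p)" using e by simp
    then show ?thesis using cong_pm1[OF p] Leg_val[OF nz] by blast
  qed
qed

lemma Leg_sq: assumes p: "prime p" "2 < p" and c: "[X*Y^2 = Z] (mod p)" and nz: "\<not> p dvd Z"
  shows "Legendre X p = Legendre Z p"
proof -
  have "[X*(X*Y^2) = X*Z] (mod p)" using c by (rule cong_scalar_left)
  then have "[(X*Y)^2 = X*Z] (mod p)" by (simp add: power2_eq_square algebra_simps)
  then have q: "QuadRes p (X*Z)" unfolding QuadRes_def by blast
  have nX: "\<not> p dvd X"
  proof
    assume "p dvd X"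
    then have "[X*Y^2 = 0] (mod p)" by (simp add: cong_0_iff)
    then have "[Z = 0] (mod p)" using c by (metis cong_sym cong_trans)
    then show False using nz by (simp add: cong_0_iff)
  qed
  have nXZ: "\<not> [X*Z = 0] (mod p)" using nX nz p by (simp add: cong_0_iff prime_dvd_mult_iff)
  have "Legendre (X*Z) p = 1" using q nXZ by (simp add: Legendre_def)
  then have "Legendre X p * Legendre Z p = 1" using Leg_mult[OF p] by simp
  moreover have "Legendre X p = 1 \<or> Legendre X p = -1" using nX Leg_val[of X p] by (simp add: cong_0_iff)
  moreover have "Legendre Z p = 1 \<or> Legendre Z p = -1" using nz Leg_val[of Z p] by (simp add: cong_0_iff)
  ultimately show ?thesis by auto
qed

lemma Leg_rec: assumes p: "prime p" "2 < p" and q: "prime q" "2 < q" and "p \<noteq> q" and "p mod 4 = 1"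
  shows "Legendre q p = Legendre p q"
proof -
  have pn: "prime (nat p)" "prime (nat q)" using p q by auto
  have "Legendre p q * Legendre q p = (-1::int) ^ (nat ((p - 1) div 2 * ((q - 1) div 2)))"
    using Quadratic_Reciprocity_int[OF pn(1) p(2) pn(2) q(2) assms(5)] .
  moreover have "even ((p - 1) div 2 * ((q - 1) div 2))" using assms(6) by simp presburger
  moreover have "0 \<le> (p - 1) div 2 * ((q - 1) div 2)" using p q by simp
  ultimately have "Legendre p q * Legendre q p = 1" by (simp add: even_nat_iff)
  moreover have "\<not> [p = 0] (mod q)" "\<not> [q = 0] (mod p)" using p q assms(5)
    primes_dvd_imp_eq[of q p] primes_dvd_imp_eq[of p q] by (auto simp: cong_0_iff)
  ultimately show ?thesis using Leg_val by (metis mult_cancel_right2 mult_minus_right  square_eq_1_iff)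
qed

lemma Leg_two: assumes p: "prime p" "p mod 8 = 3 \<or> p mod 8 = 5"
  shows "Legendre 2 p = -1"
proof -
  have p2: "2 < p" using p prime_ge_2_int[of p] by (cases "p = 2") auto
  have pn: "prime (nat p)" "2 < nat p" using p p2 by auto
  have pi: "int (nat p) = p" using p2 by simp
  have nz: "[2 \<noteq> 0] (mod int (nat p))" using pi p2 by (auto simp: cong_0_iff zdvd_not_zless)
  interpret G: GAUSS "nat p" 2 using pn nz by unfold_locales auto
  define h where "h = (p - 1) div 2"
  have Aeq: "G.A = {0<..h}" unfolding G.A_def h_def pi ..
  have Ceq: "G.C = (\<lambda>x. x*2) ` {0<..h}"
  proof -
    have "(\<lambda>x. x mod p) ` ((\<lambda>x. x*2) ` {0<..h}) = (\<lambda>x. x*2) ` {0<..h}"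
    proof (rule image_cong[OF refl, THEN trans])
      show "\<And>x. x \<in> (\<lambda>x. x * 2) ` {0<..h} \<Longrightarrow> x mod p = x"
        using p2 unfolding h_def by auto
    qed (simp add: image_ident)
    then show ?thesis unfolding G.C_def G.B_def Aeq pi by simp
  qed
  have Eeq: "G.E = (\<lambda>x. x*2) ` {h div 2 + 1 .. h}"
  proof -
    have "G.E = (\<lambda>x. x*2) ` {0<..h} \<inter> {h<..}" unfolding G.E_def Ceq h_def pi ..
    also have "\<dots> = (\<lambda>x. x*2) ` {h div 2 + 1 .. h}"
    proof
      show "(\<lambda>x. x * 2) ` {0<..h} \<inter> {h<..} \<subseteq> (\<lambda>x. x * 2) ` {h div 2 + 1..h}" by auto
      show "(\<lambda>x. x * 2) ` {h div 2 + 1..h} \<subseteq> (\<lambda>x. x * 2) ` {0<..h} \<inter> {h<..}" by auto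
    qed
    finally show ?thesis .
  qed
  have "card G.E = card {h div 2 + 1 .. h}" unfolding Eeq by (rule card_image) (auto simp: inj_on_def)
  also have "\<dots> = nat (h - h div 2)" by simp
  finally have cE: "card G.E = nat (h - h div 2)" .
  have "odd (h - h div 2)" using p(2) unfolding h_def by presburger
  moreover have "0 \<le> h - h div 2" unfolding h_def using p2 by simp
  ultimately have "odd (card G.E)" unfolding cE using even_nat_iff by blast
  then show ?thesis using G.gauss_lemma pi by simp
qed

lemma DL_parts: assumes "deng_li n l m"
  shows "n \<ge> 2" "even n" "\<forall>i\<in>{1..n}. prime (l i)" "inj_on l {1..n}"
    "m = (\<Prod>i\<in>{1..n}. l i)" "[l 1 = 3] (mod 8)" "\<forall>i\<in>{2..n}. [l i = 5] (mod 8)"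
    "Legendre (l 1) (l 2) = -1" "\<forall>j\<in>{3..n}. Legendre (l 1) (l j) = 1"
    "\<forall>i j. 2 \<le> i \<and> i < j \<and> j \<le> n \<longrightarrow> Legendre (l i) (l j) = -1"
  using assms unfolding deng_li_def by blast+

lemmas DL_basic = DL_parts(1,2,5,4)

lemma DL_prime: assumes DL: "deng_li n l m" and i: "i \<in> {1..n}"
  shows "prime (l i)" "2 < l i" "i = 1 \<Longrightarrow> l i mod 8 = 3" "i \<ge> 2 \<Longrightarrow> l i mod 8 = 5"
proof -
  show pr: "prime (l i)" using DL_parts(3)[OF DL] i by blast
  show m1: "i = 1 \<Longrightarrow> l i mod 8 = 3" using DL_parts(6)[OF DL] by (simp add: cong_def)
  show m2: "i \<ge> 2 \<Longrightarrow> l i mod 8 = 5" using DL_parts(7)[OF DL] i by (simp add: cong_def)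
  have "l i \<ge> 2" using pr prime_ge_2_int by blast
  moreover have "l i \<noteq> 2" using m1 m2 i by (cases "i = 1") auto
  ultimately show "2 < l i" by simp
qed

lemma DL_mod4: assumes DL: "deng_li n l m" and i: "i \<in> {1..n}"
  shows "i = 1 \<Longrightarrow> l i mod 4 = 3" "i \<ge> 2 \<Longrightarrow> l i mod 4 = 1"
  using DL_prime(3,4)[OF DL i] by presburger+

lemma DL_tab: assumes DL: "deng_li n l m" and j: "j \<in> {2..n}" and i: "i \<in> {1..n}" and ij: "i \<noteq> j"
  shows "Legendre (l i) (l j) = (if j \<ge> 3 \<and> i = 1 then 1 else -1)"
proof -
  have j1: "j \<in> {1..n}" using j by auto
  have ne: "l i \<noteq> l j" using inj_onD[OF DL_parts(4)[OF DL] _ i j1] ij by blast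
  have rec: "Legendre (l i) (l j) = Legendre (l j) (l i)"
    by (rule Leg_rec) (use DL_prime[OF DL j1] DL_prime[OF DL i] DL_mod4[OF DL j1] j ne in auto)
  show ?thesis
  proof (cases "i = 1")
    case True
    show ?thesis
    proof (cases "j = 2")
      case True then show ?thesis using DL_parts(8)[OF DL] \<open>i = 1\<close> by simp
    next
      case False then have "j \<in> {3..n}" using j by auto
      then show ?thesis using DL_parts(9)[OF DL] \<open>i = 1\<close> by simp
    qed
  next
    case False
    then have i2: "i \<ge> 2" using i by auto
    show ?thesis
    proof (cases "i < j")
      case True
      then have "Legendre (l i) (l j) = -1" using DL_parts(10)[OF DL] j i2 by simp
      then show ?thesis using i2 by simp
    next
      case False
      then have "j < i" using ij by simp
      then have "Legendre (l j) (l i) = -1" using DL_parts(10)[OF DL] j i by simp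
      then show ?thesis using rec i2 by simp
    qed
  qed
qed

lemma prod_if_one: "finite B \<Longrightarrow> (\<Prod>i\<in>B. if i = (1::nat) then 1 else (-1::int)) = (-1)^card (B - {1})"
proof (cases "1 \<in> B")
  case True
  assume f: "finite B"
  have "B = insert 1 (B - {1})" using True by auto
  then have "(\<Prod>i\<in>B. if i = (1::nat) then 1 else (-1::int)) = (\<Prod>i\<in>B - {1}. if i = (1::nat) then 1 else (-1::int))"
    using prod.remove[OF f True, of "\<lambda>i. if i = (1::nat) then 1 else (-1::int)"] by simp
  also have "\<dots> = (\<Prod>i\<in>B - {1}. (-1::int))" by (rule prod.cong) auto
  finally show ?thesis by simp
next
  case False
  then have "(\<Prod>i\<in>B. if i = (1::nat) then 1 else (-1::int)) = (\<Prod>i\<in>B. (-1::int))" by (intro prod.cong) auto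
  then show ?thesis using False by simp
qed

lemma Leg_E: assumes DL: "deng_li n l m" and j: "j \<in> {2..n}" and B: "B \<subseteq> {1..n}" "j \<notin> B"
  shows "Legendre (\<Prod>i\<in>B. l i) (l j) = (if j = 2 then (-1)^card B else (-1)^card (B - {1}))"
proof -
  have j1: "j \<in> {1..n}" using j by auto
  have fB: "finite B" using B finite_subset by blast
  have "Legendre (\<Prod>i\<in>B. l i) (l j) = (\<Prod>i\<in>B. Legendre (l i) (l j))"
    by (rule Leg_prod) (use DL_prime[OF DL j1] fB in auto)
  also have "\<dots> = (\<Prod>i\<in>B. if j \<ge> 3 \<and> i = 1 then 1 else -1)"
  proof (rule prod.cong[OF refl])
    fix i assume "i \<in> B"
    then have "i \<in> {1..n}" "i \<noteq> j" using B by auto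
    then show "Legendre (l i) (l j) = (if j \<ge> 3 \<and> i = 1 then 1 else -1)" using DL_tab[OF DL j] by simp
  qed
  finally have e: "Legendre (\<Prod>i\<in>B. l i) (l j) = (\<Prod>i\<in>B. if j \<ge> 3 \<and> i = 1 then 1 else -1)" .
  show ?thesis
  proof (cases "j = 2")
    case True then show ?thesis using e by simp
  next
    case False
    then have "j \<ge> 3" using j by auto
    then have "(\<Prod>i\<in>B. if j \<ge> 3 \<and> i = 1 then 1 else (-1::int)) = (\<Prod>i\<in>B. if i = 1 then 1 else -1)" by simp
    then show ?thesis using e False prod_if_one[OF fB] by simp
  qed
qed

lemma neg1_pow_iff: "((-1::int)^k = (if a0 then -1 else 1)) \<longleftrightarrow> (even k \<longleftrightarrow> \<not> a0)"
  by (cases "even k") auto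

lemma classify:
  assumes DL: "deng_li n l m" and A: "A \<subseteq> {1..n}" and sg: "\<sigma> = 1 \<or> \<sigma> = -1"
    and eq: "(\<Prod>i\<in>A. l i)*U^2 - (\<Prod>i\<in>{1..n}-A. l i)*V^2 = \<sigma>*(if a0 then 2 else 1)"
  shows "(\<not>a0 \<and> (A = {} \<or> A = {1..n})) \<or> (a0 \<and> (A = {2} \<or> A = {1} \<union> {3..n}))"
proof -
  define B where "B = {1..n} - A"
  define D where "D = (\<Prod>i\<in>A. l i)"
  define E where "E = (\<Prod>i\<in>B. l i)"
  define t :: int where "t = (if a0 then 2 else 1)"
  define s0 :: int where "s0 = (if a0 then -1 else 1)"
  have eq': "D*U^2 - E*V^2 = \<sigma>*t" using eq unfolding D_def E_def B_def t_def .
  have fA: "finite A" using A finite_subset by blast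
  have fB: "finite B" unfolding B_def by simp
  have n2: "n \<ge> 2" "even n" using DL_parts[OF DL] by auto
  have Lst: "Legendre (\<sigma>*t) (l j) = s0" if j: "j \<in> {2..n}" for j
  proof -
    have j1: "j \<in> {1..n}" using j by auto
    note P = DL_prime[OF DL j1]
    have p: "prime (l j)" "2 < l j" using P by auto
    have m4: "l j mod 4 = 1" using DL_mod4(2)[OF DL j1] j by auto
    have "Legendre \<sigma> (l j) = 1" using sg Leg_one[OF p(1)] Leg_minus1(1)[OF p m4] by auto
    moreover have "Legendre t (l j) = s0" unfolding t_def s0_def
      using Leg_one[OF p(1)] Leg_two[of "l j"] P j by auto
    ultimately show ?thesis using Leg_mult[OF p] by simp
  qed
  have ndv: "\<not> l j dvd \<sigma>*t" if j: "j \<in> {1..n}" for j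
  proof
    assume "l j dvd \<sigma>*t"
    then have "l j dvd t" using sg by auto
    then have "l j \<le> t" using zdvd_imp_le t_def by (simp split: if_splits)
    then show False using DL_prime(2)[OF DL j] t_def by (simp split: if_splits)
  qed
  have condA: "Legendre E (l j) = s0" if j: "j \<in> {2..n}" "j \<in> A" for j
  proof -
    have j1: "j \<in> {1..n}" using j by auto
    note P = DL_prime[OF DL j1]
    have p: "prime (l j)" "2 < l j" using P by auto
    have m4: "l j mod 4 = 1" using DL_mod4(2)[OF DL j1] j by auto
    have "l j dvd D" unfolding D_def using fA j by (simp add: dvd_prodI)
    then have "l j dvd ((-E)*V^2 - \<sigma>*t)" using eq' by (metis dvd_minus_iff dvd_mult2 diff_eq_eq minus_diff_eq mult_minus_left add.commute diff_add_cancel)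
    then have "[(-E)*V^2 = \<sigma>*t] (mod l j)" by (simp add: cong_iff_dvd_diff)
    then have "Legendre (-E) (l j) = Legendre (\<sigma>*t) (l j)" using Leg_sq[OF p] ndv[OF j1] by blast
    moreover have "Legendre (-E) (l j) = Legendre E (l j)"
      using Leg_mult[OF p, of "-1" E] Leg_minus1(1)[OF p m4] by simp
    ultimately show ?thesis using Lst[OF j(1)] by simp
  qed
  have condB: "Legendre D (l j) = s0" if j: "j \<in> {2..n}" "j \<in> B" for j
  proof -
    have j1: "j \<in> {1..n}" using j by auto
    note P = DL_prime[OF DL j1]
    have p: "prime (l j)" "2 < l j" using P by auto
    have "l j dvd E" unfolding E_def using fB j by (simp add: dvd_prodI)
    then have "l j dvd (D*U^2 - \<sigma>*t)" using eq' by (metis dvd_mult2 diff_diff_eq2 diff_add_cancel add_diff_cancel_left')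
    then have "[D*U^2 = \<sigma>*t] (mod l j)" by (simp add: cong_iff_dvd_diff)
    then have "Legendre D (l j) = Legendre (\<sigma>*t) (l j)" using Leg_sq[OF p] ndv[OF j1] by blast
    then show ?thesis using Lst[OF j(1)] by simp
  qed
  have BA: "B \<subseteq> {1..n}" "A \<inter> B = {}" "A \<union> B = {1..n}" using A unfolding B_def by auto
  have cardAB: "card A + card B = n" using card_Un_disjoint[OF fA fB BA(2)] BA(3) by simp
  have par: "even (card A) \<longleftrightarrow> \<not> a0"
  proof (cases "2 \<in> A")
    case True
    have "2 \<notin> B" using True BA(2) by blast
    then have "Legendre E (l 2) = (-1)^card B" using Leg_E[OF DL _ BA(1), of 2] n2 unfolding E_def by auto
    then have "even (card B) \<longleftrightarrow> \<not> a0" using condA[of 2] True n2 unfolding s0_def neg1_pow_iff[symmetric] by auto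
    then show ?thesis using cardAB n2 by (metis even_add)
  next
    case False
    then have "2 \<in> B" using n2 unfolding B_def by auto
    have "Legendre D (l 2) = (-1)^card A" using Leg_E[OF DL _ A] False n2 unfolding D_def by auto
    then show ?thesis using condB[of 2] \<open>2 \<in> B\<close> n2 unfolding s0_def neg1_pow_iff[symmetric] by auto
  qed
  have parB: "even (card B) \<longleftrightarrow> \<not> a0" using par cardAB n2 by (metis even_add)
  have jA: "1 \<in> A" if j: "j \<in> {3..n}" "j \<in> A" for j
  proof (rule ccontr)
    assume "1 \<notin> A"
    then have b1: "1 \<in> B" using n2 unfolding B_def by auto
    have j2: "j \<in> {2..n}" "j \<notin> B" using j BA by auto
    have "Legendre E (l j) = (-1)^card (B - {1})" using Leg_E[OF DL j2(1) BA(1) j2(2)] j unfolding E_def by auto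
    then have "even (card (B - {1})) \<longleftrightarrow> \<not> a0" using condA[of j] j2 j unfolding s0_def neg1_pow_iff[symmetric] by auto
    moreover have "card (B - {1}) = card B - 1" using b1 fB by simp
    moreover have "card B \<ge> 1" using b1 fB by (metis One_nat_def Suc_leI card_gt_0_iff empty_iff)
    ultimately show False using parB by (metis One_nat_def even_Suc Suc_diff_1 less_le_trans zero_less_one le_imp_less_Suc less_Suc_eq_le)
  qed
  have jB: "1 \<notin> A" if j: "j \<in> {3..n}" "j \<notin> A" for j
  proof
    assume a1: "1 \<in> A"
    have j2: "j \<in> {2..n}" "j \<in> B" using j unfolding B_def by auto
    have "Legendre D (l j) = (-1)^card (A - {1})" using Leg_E[OF DL j2(1) A j(2)] j unfolding D_def by auto
    then have "even (card (A - {1})) \<longleftrightarrow> \<not> a0" using condB[of j] j2 j unfolding s0_def neg1_pow_iff[symmetric] by auto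
    moreover have "card (A - {1}) = card A - 1" using a1 fA by simp
    moreover have "card A \<ge> 1" using a1 fA by (metis One_nat_def Suc_leI card_gt_0_iff empty_iff)
    ultimately show False using par by (metis One_nat_def even_Suc Suc_diff_1 less_le_trans zero_less_one le_imp_less_Suc less_Suc_eq_le)
  qed
  have split: "x \<in> {1..n} \<Longrightarrow> x = 1 \<or> x = 2 \<or> x \<in> {3..n}" for x by auto
  show ?thesis
  proof (cases "1 \<in> A")
    case True
    then have s3: "{3..n} \<subseteq> A" using jB by blast
    show ?thesis
    proof (cases "2 \<in> A")
      case True
      have "A = {1..n}" using A s3 True \<open>1 \<in> A\<close> split by blast
      then show ?thesis using par n2 by auto
    next
      case False
      have Ae: "A = {1} \<union> {3..n}"
      proof
        show "A \<subseteq> {1} \<union> {3..n}" using A False split by blast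
        show "{1} \<union> {3..n} \<subseteq> A" using s3 \<open>1 \<in> A\<close> by blast
      qed
      have "card A = n - 1" unfolding Ae using n2 by (simp add: card_insert_if)
      then have "a0" using par n2 by (metis One_nat_def Suc_pred even_Suc le_less_trans less_one not_le zero_less_numeral less_2_cases_iff)
      then show ?thesis using Ae by auto
    qed
  next
    case False
    then have s3: "{3..n} \<inter> A = {}" using jA by blast
    show ?thesis
    proof (cases "2 \<in> A")
      case True
      have Ae: "A = {2}" using A s3 True False split by blast
      then have "a0" using par by simp
      then show ?thesis using Ae by auto
    next
      case F2: False
      have Ae: "A = {}" using A s3 F2 False split by blast
      then have "\<not> a0" using par by simp
      then show ?thesis using Ae by auto
    qed
  qed
qed

lemma prod_mod4: "finite S \<Longrightarrow> (\<forall>i\<in>S. f i mod 4 = (1::int)) \<Longrightarrow> (\<Prod>i\<in>S. f i) mod 4 = 1"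
proof (induction S rule: finite_induct)
  case empty then show ?case by simp
next
  case (insert a S)
  have "(f a * prod f S) mod 4 = ((f a mod 4) * (prod f S mod 4)) mod 4" by (simp add: mod_mult_eq)
  also have "\<dots> = 1" using insert by simp
  finally show ?case using insert by simp
qed

lemma DL_m4: assumes DL: "deng_li n l m" shows "m mod 4 = 3" "odd m" "m > 0"
proof -
  have n2: "n \<ge> 2" using DL_parts(1)[OF DL] .
  have e: "{1..n} = insert 1 {2..n}" using n2 by auto
  have m: "m = l 1 * (\<Prod>i\<in>{2..n}. l i)" using DL_parts(5)[OF DL] e by simp
  have "(\<Prod>i\<in>{2..n}. l i) mod 4 = 1"
    by (rule prod_mod4) (use DL_mod4(2)[OF DL] in auto)
  moreover have "l 1 mod 4 = 3" using DL_mod4(1)[OF DL, of 1] n2 by auto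
  moreover have "(l 1 * (\<Prod>i\<in>{2..n}. l i)) mod 4 = ((l 1 mod 4) * ((\<Prod>i\<in>{2..n}. l i) mod 4)) mod 4"
    by (simp add: mod_mult_eq)
  ultimately have "(l 1 * (\<Prod>i\<in>{2..n}. l i)) mod 4 = 3" by simp
  then show m4: "m mod 4 = 3" using m by simp
  then show "odd m" by presburger
  have "\<forall>i\<in>{1..n}. l i > 0" using DL_prime(2)[OF DL] by force
  then have "(\<Prod>i\<in>{1..n}. l i) > 0" by (intro prod_pos) auto
  then show "m > 0" using DL_parts(5)[OF DL] by simp
qed

lemma DL_coprime: assumes DL: "deng_li n l m" and S: "S \<subseteq> {1..n}" "T \<subseteq> {1..n}" "S \<inter> T = {}"
  shows "coprime (\<Prod>i\<in>S. l i) (\<Prod>i\<in>T. l i)"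
proof (rule prod_coprime_left, rule prod_coprime_right)
  fix i j assume "i \<in> S" "j \<in> T"
  then have ij: "i \<in> {1..n}" "j \<in> {1..n}" "i \<noteq> j" using S by auto
  then have "l i \<noteq> l j" using inj_onD[OF DL_parts(4)[OF DL]] by blast
  then show "coprime (l i) (l j)" using primes_coprime DL_prime(1)[OF DL ij(1)] DL_prime(1)[OF DL ij(2)] by blast
qed

lemma DL_DE: assumes DL: "deng_li n l m" and A: "A \<subseteq> {1..n}"
  shows "(\<Prod>i\<in>A. l i) * (\<Prod>i\<in>{1..n}-A. l i) = m" "odd (\<Prod>i\<in>A. l i)" "odd (\<Prod>i\<in>{1..n}-A. l i)"
    "coprime (\<Prod>i\<in>A. l i) (\<Prod>i\<in>{1..n}-A. l i)"
proof -
  have fA: "finite A" using A finite_subset by blast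
  show e: "(\<Prod>i\<in>A. l i) * (\<Prod>i\<in>{1..n}-A. l i) = m"
    using prod.union_disjoint[OF fA, of "{1..n}-A" l] A DL_parts(5)[OF DL]
    by (simp add: Un_absorb1 Un_Diff_cancel)
  show "odd (\<Prod>i\<in>A. l i)" "odd (\<Prod>i\<in>{1..n}-A. l i)" using e DL_m4(2)[OF DL] by auto
  show "coprime (\<Prod>i\<in>A. l i) (\<Prod>i\<in>{1..n}-A. l i)" by (rule DL_coprime[OF DL A]) auto
qed

lemma ram_eq: assumes DL: "deng_li n l m" and A: "A \<subseteq> {1..n}"
  shows "ram_ideal m l n a0 A = Iset m (\<Prod>i\<in>A. l i) a0"
proof -
  define xs where "xs = filter (\<lambda>i. i \<in> A) [1..<n+1]"
  have sx: "set xs = A" unfolding xs_def using A by auto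
  have dx: "distinct xs" unfolding xs_def by simp
  have om: "odd m" using DL_m4[OF DL] by simp
  have dvm: "(\<Prod>i\<in>A. l i) dvd m" using DL_DE(1)[OF DL A] by (metis dvd_triv_left)
  have L: "ideal_prod_list m (map (\<lambda>i. primeL m (l i)) xs) = Iset m (\<Prod>i\<in>A. l i) False"
  proof -
    have h1: "\<forall>i\<in>set xs. prime (l i)" using sx A DL_prime(1)[OF DL] by auto
    have h2: "inj_on l (set xs)" using sx inj_on_subset[OF DL_parts(4)[OF DL] A] by simp
    have h3: "(\<Prod>i\<in>set xs. l i) dvd m" using sx dvm by simp
    show ?thesis using prodlist[OF dx h1 h2 h3] sx by simp
  qed
  show ?thesis
  proof (cases a0)
    case True
    then show ?thesis unfolding ram_ideal_def xs_def[symmetric] L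
      using prime2_eq[OF om] prod2[OF om dvm] by simp
  next
    case False
    then show ?thesis unfolding ram_ideal_def xs_def[symmetric] L
      using pideal_one prod_UNIV[OF Iset_closed[OF dvm]] by simp
  qed
qed

lemma princ_iff: assumes DL: "deng_li n l m" and A: "A \<subseteq> {1..n}"
  shows "is_principal m (ram_ideal m l n a0 A) \<longleftrightarrow>
    (\<exists>U V \<sigma>. (\<sigma> = 1 \<or> \<sigma> = -1) \<and> (\<Prod>i\<in>A. l i)*U^2 - (\<Prod>i\<in>{1..n}-A. l i)*V^2 = \<sigma> * (if a0 then 2 else 1))"
proof
  assume "is_principal m (ram_ideal m l n a0 A)"
  then show "\<exists>U V \<sigma>. (\<sigma> = 1 \<or> \<sigma> = -1) \<and> (\<Prod>i\<in>A. l i)*U^2 - (\<Prod>i\<in>{1..n}-A. l i)*V^2 = \<sigma> * (if a0 then 2 else 1)"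
    unfolding ram_eq[OF DL A] using principal_imp[OF DL_DE[OF DL A] DL_m4(1)[OF DL]] by blast
next
  assume "\<exists>U V \<sigma>. (\<sigma> = 1 \<or> \<sigma> = -1) \<and> (\<Prod>i\<in>A. l i)*U^2 - (\<Prod>i\<in>{1..n}-A. l i)*V^2 = \<sigma> * (if a0 then 2 else 1)"
  then obtain U V \<sigma> where "\<sigma> = 1 \<or> \<sigma> = -1" "(\<Prod>i\<in>A. l i)*U^2 - (\<Prod>i\<in>{1..n}-A. l i)*V^2 = \<sigma> * (if a0 then 2 else 1)" by blast
  from Iset_pideal[OF DL_DE(1,2,3)[OF DL A] this] show "is_principal m (ram_ideal m l n a0 A)"
    unfolding ram_eq[OF DL A] is_principal_def by blast
qed

lemma pideal_mult: "pideal m (zmul m a b) = ideal_prod m (pideal m a) (pideal m b)"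
proof
  show "pideal m (zmul m a b) \<subseteq> ideal_prod m (pideal m a) (pideal m b)"
  proof
    fix x assume "x \<in> pideal m (zmul m a b)"
    then obtain r where "x = zmul m r (zmul m a b)" by (auto simp: pideal_eq)
    then have "x = zmul m (zmul m r a) b" by (simp add: zmul_assoc)
    moreover have "zmul m r a \<in> pideal m a" "b \<in> pideal m b"
      by (auto simp: pideal_eq intro: range_eqI[of _ _ "(1,0)"] simp: zmul_one)
    ultimately show "x \<in> ideal_prod m (pideal m a) (pideal m b)" using prod_mem by metis
  qed
next
  show "ideal_prod m (pideal m a) (pideal m b) \<subseteq> pideal m (zmul m a b)"
  proof (rule prod_least)
    show "closedI m (pideal m (zmul m a b))" unfolding pideal_def by (rule closedI_ideal_gen)
  next
    fix x y assume "x \<in> pideal m a" "y \<in> pideal m b"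
    then obtain r1 r2 where "x = zmul m r1 a" "y = zmul m r2 b" by (auto simp: pideal_eq)
    then have "zmul m x y = zmul m (zmul m r1 r2) (zmul m a b)" by (simp add: zmul_def algebra_simps)
    then show "zmul m x y \<in> pideal m (zmul m a b)" by (auto simp: pideal_eq)
  qed
qed

lemma no_sqrt_m1: assumes DL: "deng_li n l m" and d: "l 1 dvd s^2 + 1" shows False
proof -
  have n1: "1 \<in> {1..n}" using DL_parts(1)[OF DL] by auto
  have p: "prime (l 1)" "2 < l 1" using DL_prime[OF DL n1] by auto
  have m4: "l 1 mod 4 = 3" using DL_mod4(1)[OF DL n1] by simp
  have "[1*s^2 = -1] (mod l 1)" using d by (simp add: cong_iff_dvd_diff)
  moreover have "\<not> l 1 dvd -1" using p by auto
  ultimately have "Legendre 1 (l 1) = Legendre (-1) (l 1)" using Leg_sq[OF p] by blast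
  then show False using Leg_one[OF p(1)] Leg_minus1(2)[OF p m4] by simp
qed

lemma prod_dvd_primes: assumes DL: "deng_li n l m" and "finite S" "S \<subseteq> {1..n}" "\<forall>i\<in>S. l i dvd P"
  shows "(\<Prod>i\<in>S. l i) dvd P"
  using assms(2-4)
proof (induction S rule: finite_induct)
  case empty then show ?case by simp
next
  case (insert i S)
  have "coprime (\<Prod>j\<in>{i}. l j) (\<Prod>j\<in>S. l j)"
    by (rule DL_coprime[OF DL]) (use insert in auto)
  then have "coprime (l i) (\<Prod>j\<in>S. l j)" by simp
  moreover have "l i dvd P" "(\<Prod>j\<in>S. l j) dvd P" using insert by auto
  ultimately show ?case using insert divides_mult by auto
qed

lemma split_sq: assumes DL: "deng_li n l m" and PQ: "P > 0" "Q > 0" "coprime P Q" "P*Q = m*W^2" "W > 0"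
  shows "\<exists>A r s. A \<subseteq> {1..n} \<and> P = (\<Prod>i\<in>A. l i)*r^2 \<and> Q = (\<Prod>i\<in>{1..n}-A. l i)*s^2 \<and> r > 0 \<and> s > 0 \<and> r*s = W"
proof -
  define A where "A = {i\<in>{1..n}. l i dvd P}"
  define D where "D = (\<Prod>i\<in>A. l i)"
  define E where "E = (\<Prod>i\<in>{1..n}-A. l i)"
  have A: "A \<subseteq> {1..n}" unfolding A_def by auto
  have DE: "D*E = m" using DL_DE(1)[OF DL A] unfolding D_def E_def .
  have mpos: "m > 0" using DL_m4(3)[OF DL] .
  have lp: "\<forall>i\<in>{1..n}. l i > 0" using DL_prime(2)[OF DL] by force
  have Dpos: "D > 0" "E > 0" unfolding D_def E_def using lp A by (auto intro!: prod_pos)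
  have "D dvd P" unfolding D_def by (rule prod_dvd_primes[OF DL]) (use A in \<open>auto simp: A_def intro: finite_subset\<close>)
  then obtain P' where P': "P = D*P'" by (auto elim: dvdE)
  have "E dvd Q" unfolding E_def
  proof (rule prod_dvd_primes[OF DL], simp, simp, rule ballI)
    fix i assume i: "i \<in> {1..n} - A"
    then have "l i dvd m" using DL_parts(5)[OF DL] by (simp add: dvd_prodI)
    then have "l i dvd P*Q" using PQ(4) by simp
    moreover have "\<not> l i dvd P" using i by (simp add: A_def)
    moreover have "prime (l i)" using i DL_prime(1)[OF DL] by auto
    ultimately show "l i dvd Q" using prime_dvd_mult_iff by blast
  qed
  then obtain Q' where Q': "Q = E*Q'" by (auto elim: dvdE)
  have "m*(P'*Q') = m*W^2" using PQ(4) P' Q' DE[symmetric] by (simp only: mult.assoc mult.left_commute)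
  then have PQW: "P'*Q' = W^2" using mpos by simp
  have pP: "P' > 0" using PQ(1) P' Dpos(1) by (simp add: zero_less_mult_iff)
  have pQ: "Q' > 0" using PQ(2) Q' Dpos(2) by (simp add: zero_less_mult_iff)
  have cPQ: "coprime P' Q'" using PQ(3) P' Q' by simp
  have cn: "coprime (nat P') (nat Q')" using cPQ pP pQ by (simp add: coprime_int_iff[symmetric])
  have "nat P' * nat Q' = (nat W)^2" using PQW pP pQ PQ(5) by (metis nat_mult_distrib nat_power_eq less_imp_le)
  then have sq: "is_nth_power 2 (nat P' * nat Q')" by simp
  obtain r0 where r0: "nat P' = r0^2" using is_nth_power_mult_coprime_natD(1)[OF cn sq] pP pQ by (auto elim: is_nth_powerE)
  obtain s0 where s0: "nat Q' = s0^2" using is_nth_power_mult_coprime_natD(2)[OF cn sq] pP pQ by (auto elim: is_nth_powerE)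
  have Pr: "P' = (int r0)^2" using r0 pP by (metis int_nat_eq less_imp_le of_nat_power)
  have Qs: "Q' = (int s0)^2" using s0 pQ by (metis int_nat_eq less_imp_le of_nat_power)
  have rp: "int r0 > 0" using Pr pP by (metis not_gr0 of_nat_0 of_nat_0_less_iff power_zero_numeral less_irrefl)
  have sp: "int s0 > 0" using Qs pQ by (metis not_gr0 of_nat_0 of_nat_0_less_iff power_zero_numeral less_irrefl)
  have "(int r0 * int s0)^2 = W^2" using PQW Pr Qs by (simp add: power_mult_distrib)
  then have "int r0 * int s0 = W" using rp sp PQ(5) by simp
  then show ?thesis using A P' Q' Pr Qs rp sp unfolding D_def E_def
    by (intro exI[of _ A] exI[of _ "int r0"] exI[of _ "int s0"]) (simp add: algebra_simps)
qed

lemma unit_pos: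
  assumes DL: "deng_li n l m" and fu: "fund_unit m x y"
  shows "x^2 - m*y^2 = 1" "x > 1" "y > 0"
proof -
  have n1: "1 \<in> {1..n}" using DL_parts(1)[OF DL] by auto
  have l1m: "l 1 dvd m" using DL_parts(5)[OF DL] n1 by (simp add: dvd_prodI)
  have zu: "x^2 - m*y^2 = 1 \<or> x^2 - m*y^2 = -1" using fu by (simp add: fund_unit_def zunit_def)
  show N: "x^2 - m*y^2 = 1"
  proof (rule ccontr)
    assume "x^2 - m*y^2 \<noteq> 1"
    then have "x^2 + 1 = m*y^2" using zu by simp
    then have "l 1 dvd x^2 + 1" using l1m by simp
    then show False using no_sqrt_m1[OF DL] by blast
  qed
  define sm where "sm = sqrt (real_of_int m)"
  have mpos: "m > 0" using DL_m4(3)[OF DL] .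
  have sm2: "sm^2 = real_of_int m" "sm > 0" unfolding sm_def using mpos by simp_all
  define e where "e = real_of_int x + real_of_int y * sm"
  define e' where "e' = real_of_int x - real_of_int y * sm"
  have e1: "e > 1" using fu unfolding fund_unit_def e_def sm_def by simp
  have ee: "e * e' = 1"
  proof -
    have "e * e' = (real_of_int x)^2 - (real_of_int y)^2 * sm^2" unfolding e_def e'_def by (simp add: power2_eq_square algebra_simps)
    also have "\<dots> = real_of_int (x^2 - m*y^2)" using sm2 by simp
    finally show ?thesis using N by simp
  qed
  have e'p: "e' > 0" using zero_less_mult_iff[of e e'] ee e1 by auto
  have e'1: "e' < 1"
  proof (rule ccontr)
    assume "\<not> e' < 1"
    then have "e * e' \<ge> e * 1" using e1 by (intro mult_left_mono) auto
    then show False using ee e1 by simp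
  qed
  have "e - 1 > 0" "1 - e' > 0" using e1 e'1 by simp_all
  then have "(e - 1) * (1 - e') > 0" by (rule mult_pos_pos)
  moreover have "(e-1)*(1-e') = e + e' - 1 - e*e'" by (simp add: algebra_simps)
  ultimately have "e + e' > 2" using ee by linarith
  then have "2 * real_of_int x > 2" unfolding e_def e'_def by simp
  then show "x > 1" by simp
  have "e - e' > 0" using e1 e'1 by simp
  then have "2 * real_of_int y * sm > 0" unfolding e_def e'_def by simp
  then have "real_of_int y > 0" using sm2 by (simp add: zero_less_mult_iff)
  then show "y > 0" by simp
qed

lemma descent:
  assumes DL: "deng_li n l m" and fu: "fund_unit m x y"
  shows "\<exists>A r s. (A = {2} \<or> A = {1} \<union> {3..n}) \<and> (\<Prod>i\<in>A. l i)*r^2 - (\<Prod>i\<in>{1..n}-A. l i)*s^2 = 2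
     \<and> x + 1 = (\<Prod>i\<in>A. l i)*r^2 \<and> x - 1 = (\<Prod>i\<in>{1..n}-A. l i)*s^2 \<and> y = r*s \<and> r > 0 \<and> s > 0"
proof -
  note U = unit_pos[OF DL fu]
  have n1: "1 \<in> {1..n}" using DL_parts(1)[OF DL] by auto
  have l1m: "l 1 dvd m" using DL_parts(5)[OF DL] n1 by (simp add: dvd_prodI)
  have om: "odd m" using DL_m4(2)[OF DL] .
  have mpos: "m > 0" using DL_m4(3)[OF DL] .
  have xy: "(x+1)*(x-1) = m*y^2" using U(1) by (simp add: algebra_simps power2_eq_square)
  show ?thesis
  proof (cases "even x")
    case True
    have c: "coprime (x+1) (x-1)"
    proof (rule coprimeI)
      fix c assume c1: "c dvd x+1" and c2: "c dvd x-1"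
      then have "c dvd (x+1) - (x-1)" by (rule dvd_diff)
      then have c2': "c dvd 2" by simp
      have "odd c"
      proof
        assume "even c"
        then have "2 dvd x+1" using c1 dvd_trans by blast
        then show False using True by simp
      qed
      have "c \<noteq> 0" using c2' by auto
      then have "\<bar>c\<bar> \<le> 2" using dvd_imp_le_int[of 2 c] c2' by simp
      then have "c \<in> {-2,-1,0,1,2}" by auto
      then have "\<bar>c\<bar> = 1" using \<open>odd c\<close> \<open>c \<noteq> 0\<close> by auto
      then show "is_unit c" by (simp add: zdvd1_eq)
    qed
    obtain A r s where A: "A \<subseteq> {1..n}" "x+1 = (\<Prod>i\<in>A. l i)*r^2" "x-1 = (\<Prod>i\<in>{1..n}-A. l i)*s^2" "r > 0" "s > 0" "r*s = y"
    proof -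
      have p: "x + 1 > 0" "x - 1 > 0" using U(2) by simp_all
      show ?thesis using split_sq[OF DL p c xy U(3)] that by blast
    qed
    have eq: "(\<Prod>i\<in>A. l i)*r^2 - (\<Prod>i\<in>{1..n}-A. l i)*s^2 = 1 * (if True then 2 else 1)" using A by simp
    have "A = {2} \<or> A = {1} \<union> {3..n}" using classify[OF DL A(1) _ eq] by simp
    then show ?thesis using A eq by (intro exI[of _ A] exI[of _ r] exI[of _ s]) auto
  next
    case False
    then obtain k where k: "x = 2*k+1" by (auto elim: oddE)
    have k1: "k \<ge> 1" using U(2) k by simp
    have "m*y^2 = 2*((k+1)*(2*k))" using xy k by (simp add: algebra_simps)
    then have "even (m*y^2)" by simp
    then have "even y" using om by simp
    then obtain w where w: "y = 2*w" by (auto elim: evenE)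
    have w0: "w > 0" using U(3) w by simp
    have kk: "(k+1)*k = m*w^2" using xy k w by (simp add: algebra_simps power2_eq_square)
    have c: "coprime (k+1) k"
    proof (rule coprimeI)
      fix c assume "c dvd k+1" "c dvd k"
      then have "c dvd (k+1) - k" by (rule dvd_diff)
      then show "is_unit c" by simp
    qed
    obtain A r s where A: "A \<subseteq> {1..n}" "k+1 = (\<Prod>i\<in>A. l i)*r^2" "k = (\<Prod>i\<in>{1..n}-A. l i)*s^2" "r > 0" "s > 0" "r*s = w"
    proof -
      have p: "k + 1 > 0" "k > 0" using k1 by simp_all
      show ?thesis using split_sq[OF DL p c kk w0] that by blast
    qed
    have eq: "(\<Prod>i\<in>A. l i)*r^2 - (\<Prod>i\<in>{1..n}-A. l i)*s^2 = 1 * (if False then 2 else 1)" using A by simp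
    have cl: "A = {} \<or> A = {1..n}" using classify[OF DL A(1) _ eq] by simp
    have DE: "(\<Prod>i\<in>A. l i) * (\<Prod>i\<in>{1..n}-A. l i) = m" using DL_DE(1)[OF DL A(1)] .
    show ?thesis
    proof (cases "A = {}")
      case False
      then have "A = {1..n}" using cl by simp
      then have "(\<Prod>i\<in>A. l i) = m" "(\<Prod>i\<in>{1..n}-A. l i) = 1" using DE by auto
      then have "s^2 + 1 = m * r^2" using eq by simp
      then have "l 1 dvd s^2 + 1" using l1m by simp
      then show ?thesis using no_sqrt_m1[OF DL] by blast
    next
      case True
      then have DE1: "(\<Prod>i\<in>A. l i) = 1" "(\<Prod>i\<in>{1..n}-A. l i) = m" using DE by auto
      then have rs: "r^2 - m*s^2 = 1" using eq by simp
      have xr: "x = r^2 + m*s^2" using k A(2) DE1 rs by simp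
      have yr: "y = 2*r*s" using w A(6) by simp
      define sm where "sm = sqrt (real_of_int m)"
      have sm2: "sm^2 = real_of_int m" "sm > 0" unfolding sm_def using mpos by simp_all
      define eta where "eta = real_of_int r + real_of_int s * sm"
      have zr: "zunit m r s" using rs by (simp add: zunit_def)
      have "real_of_int s * sm > 0" using A(5) sm2 by simp
      moreover have "real_of_int r \<ge> 1" using A(4) by simp
      ultimately have eta1: "eta > 1" unfolding eta_def by simp
      have H: "\<forall>u v. zunit m u v \<and> u + v * sqrt (real_of_int m) > 1 \<longrightarrow>
            x + y * sqrt (real_of_int m) \<le> u + v * sqrt (real_of_int m)"
        using fu unfolding fund_unit_def by blast
      have "zunit m r s \<and> real_of_int r + real_of_int s * sqrt (real_of_int m) > 1"
        using zr eta1 unfolding eta_def sm_def by simp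
      then have min: "real_of_int x + real_of_int y * sm \<le> eta"
        using H unfolding eta_def sm_def by blast
      have "eta^2 = real_of_int x + real_of_int y * sm"
      proof -
        have "eta^2 = (real_of_int r)^2 + (real_of_int s)^2 * sm^2 + 2 * real_of_int r * real_of_int s * sm"
          unfolding eta_def by (simp add: power2_eq_square algebra_simps)
        also have "\<dots> = real_of_int x + real_of_int y * sm" using sm2 xr yr by simp
        finally show ?thesis .
      qed
      moreover have "eta^2 > eta" using eta1 by (simp add: power2_eq_square)
      ultimately show ?thesis using min by simp
    qed
  qed
qed

lemma ratio_lemma:
  fixes x y r s Dd Ee m :: int
  assumes x1: "x+1 = Dd*r^2" and x2: "x - 1 = Ee*s^2" and yrs: "y = r*s" and DE: "Dd*Ee = m"
    and mpos: "m > 0" and xg: "x > 1" and yg: "y > 0" and nz: "Ee \<noteq> 0" "s \<noteq> 0"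
  shows "(x + y * sqrt (real_of_int m) + 1) / (x + y * sqrt (real_of_int m) - 1)
          = (real_of_int r / real_of_int (s*Ee)) * sqrt (real_of_int m)"
proof -
  define sm where "sm = sqrt (real_of_int m)"
  have sm2: "sm^2 = real_of_int m" "sm > 0" unfolding sm_def using mpos by simp_all
  have xr: "real_of_int x + 1 = real_of_int Dd * (real_of_int r)^2"
    using arg_cong[OF x1, of real_of_int] by simp
  have xs: "real_of_int x - 1 = real_of_int Ee * (real_of_int s)^2"
    using arg_cong[OF x2, of real_of_int] by simp
  have yr: "real_of_int y = real_of_int r * real_of_int s" using yrs by simp
  have mr: "real_of_int m = real_of_int Dd * real_of_int Ee" using DE by (metis of_int_mult)
  define N where "N = real_of_int x + real_of_int y * sm + 1"
  define M where "M = real_of_int x + real_of_int y * sm - 1"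
  have "real_of_int y * sm > 0" using yg sm2 by simp
  then have Mp: "M > 0" unfolding M_def using xg by simp
  have Ee0: "real_of_int Ee \<noteq> 0" "real_of_int s \<noteq> 0" using nz by auto
  have N': "N = real_of_int Dd * (real_of_int r)^2 + real_of_int r * real_of_int s * sm"
    unfolding N_def yr using xr by linarith
  have M': "M = real_of_int Ee * (real_of_int s)^2 + real_of_int r * real_of_int s * sm"
    unfolding M_def yr using xs by linarith
  have key: "N * (real_of_int s * real_of_int Ee) = real_of_int r * sm * M"
  proof -
    have "N * (real_of_int s * real_of_int Ee) = (real_of_int Dd * (real_of_int r)^2 + real_of_int r * real_of_int s * sm) * (real_of_int s * real_of_int Ee)"
      by (simp only: N')
    also have "\<dots> = real_of_int r * real_of_int s * (real_of_int Dd * real_of_int Ee * real_of_int r + real_of_int Ee * real_of_int s * sm)"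
      by (simp add: algebra_simps power2_eq_square)
    also have "\<dots> = real_of_int r * real_of_int s * (sm^2 * real_of_int r + real_of_int Ee * real_of_int s * sm)"
      using sm2 mr by simp
    also have "\<dots> = real_of_int r * sm * (real_of_int Ee * (real_of_int s)^2 + real_of_int r * real_of_int s * sm)"
      by (simp add: algebra_simps power2_eq_square)
    also have "\<dots> = real_of_int r * sm * M" by (simp only: M')
    finally show ?thesis .
  qed
  have "N / M = (real_of_int r / (real_of_int s * real_of_int Ee)) * sm"
    using key Mp Ee0 by (simp add: field_simps)
  then show ?thesis unfolding N_def M_def sm_def by simp
qed

theorem lemma5p2:
  fixes n :: nat and l :: "nat \<Rightarrow> int" and m x y :: int
  assumes DL: "deng_li n l m"
    and eps: "fund_unit m x y"
  shows
    "(\<forall>a0 A. A \<subseteq> {1..n} \<longrightarrow>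
        (is_principal m (ram_ideal m l n a0 A) \<longleftrightarrow>
           (\<not> a0 \<and> A = {}) \<or> (\<not> a0 \<and> A = {1..n}) \<or>
           (a0 \<and> A = {2}) \<or> (a0 \<and> A = {1} \<union> {3..n})))
   \<and> (\<forall>a0 A. A \<subseteq> {1..n} \<and> A \<noteq> {} \<and> A \<noteq> {1..n} \<and>
        is_principal m (ram_ideal m l n a0 A) \<longrightarrow> a0)
   \<and> ram_ideal m l n False {1..n} = pideal m (0, 1)
   \<and> (\<exists>s::int. (s = 1 \<or> s = -1) \<and>
        (\<exists>a1 b1. a1 \<noteq> 0 \<and> b1 \<noteq> 0 \<and>
           pideal m (b1 * (x + s), b1 * y) = ideal_prod m (pideal m (a1, 0)) (ram_ideal m l n True {2})) \<and>
        (\<exists>a2 b2. a2 \<noteq> 0 \<and> b2 \<noteq> 0 \<and>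
           pideal m (b2 * (x - s), b2 * y) = ideal_prod m (pideal m (a2, 0)) (ram_ideal m l n True ({1} \<union> {3..n}))))
   \<and> (\<exists>a b :: int. odd a \<and> odd b \<and>
        (x + y * sqrt (real_of_int m) + 1) / (x + y * sqrt (real_of_int m) - 1)
          = (real_of_int a / real_of_int b) * sqrt (real_of_int m))
   \<and> (\<exists>s0::int. (s0 = 1 \<or> s0 = -1) \<and>
        (\<exists>a b. a \<noteq> 0 \<and> b \<noteq> 0 \<and>
           pideal m (b * (x + s0), b * y) = ideal_prod m (pideal m (a, 0)) (ram_ideal m l n True {2})))"
proof -
  have n2: "n \<ge> 2" using DL_parts(1)[OF DL] .
  have mprod: "(\<Prod>i\<in>{1..n}. l i) = m" using DL_parts(5)[OF DL] by simp
  define S where "S = {1} \<union> {3..n}"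
  have S_sub: "S \<subseteq> {1..n}" "{2} \<subseteq> {1..n}" using n2 unfolding S_def by auto
  have cS: "{1..n} - {2} = S" "{1..n} - S = {2}" using n2 unfolding S_def by auto
  obtain A0 r s where A0: "A0 = {2} \<or> A0 = S"
    and eq: "(\<Prod>i\<in>A0. l i)*r^2 - (\<Prod>i\<in>{1..n}-A0. l i)*s^2 = 2"
    and x1: "x + 1 = (\<Prod>i\<in>A0. l i)*r^2" and x2: "x - 1 = (\<Prod>i\<in>{1..n}-A0. l i)*s^2"
    and yrs: "y = r*s" and rp: "r > 0" and sp: "s > 0"
    using descent[OF DL eps] unfolding S_def by blast
  define A1 where "A1 = {1..n} - A0"
  define Dd where "Dd = (\<Prod>i\<in>A0. l i)"
  define Ee where "Ee = (\<Prod>i\<in>A1. l i)"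
  have A0s: "A0 \<subseteq> {1..n}" using A0 S_sub by auto
  have A1s: "A1 \<subseteq> {1..n}" unfolding A1_def by auto
  have A10: "{1..n} - A1 = A0" unfolding A1_def using A0s by auto
  have A1c: "(A0 = {2} \<and> A1 = S) \<or> (A0 = S \<and> A1 = {2})" using A0 cS unfolding A1_def by auto
  have eq': "Dd*r^2 - Ee*s^2 = 2" using eq unfolding Dd_def Ee_def A1_def .
  have DE: "Dd*Ee = m" "odd Dd" "odd Ee" using DL_DE[OF DL A0s] unfolding Dd_def Ee_def A1_def by auto
  have I0: "ram_ideal m l n True A0 = pideal m (Dd*r, s)"
    unfolding ram_eq[OF DL A0s] Dd_def[symmetric]
    by (rule Iset_pideal[OF DE(1) DE(2) DE(3), of 1]) (use eq' in simp_all)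
  have I1: "ram_ideal m l n True A1 = pideal m (Ee*s, r)"
    unfolding ram_eq[OF DL A1s] Ee_def[symmetric]
    by (rule Iset_pideal[where E=Dd and \<sigma>="-1"]) (use eq' DE in \<open>simp_all add: mult.commute\<close>)
  have P0: "pideal m (x+1, y) = ideal_prod m (pideal m (r,0)) (ram_ideal m l n True A0)"
  proof -
    have "(x+1, y) = zmul m (r,0) (Dd*r, s)" using x1 yrs unfolding Dd_def by (simp add: zmul_def power2_eq_square)
    then show ?thesis unfolding I0 using pideal_mult[of m "(r,0)" "(Dd*r,s)"] by simp
  qed
  have P1: "pideal m (x-1, y) = ideal_prod m (pideal m (s,0)) (ram_ideal m l n True A1)"
  proof -
    have "(x-1, y) = zmul m (s,0) (Ee*s, r)" using x2 yrs A10 unfolding Ee_def A1_def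
      by (simp add: zmul_def power2_eq_square mult.commute)
    then show ?thesis unfolding I1 using pideal_mult[of m "(s,0)" "(Ee*s,r)"] by simp
  qed
  have prA0: "is_principal m (ram_ideal m l n True A0)" using I0 unfolding is_principal_def by blast
  have prA1: "is_principal m (ram_ideal m l n True A1)" using I1 unfolding is_principal_def by blast
  have prboth: "is_principal m (ram_ideal m l n True {2})" "is_principal m (ram_ideal m l n True S)"
    using A1c prA0 prA1 by auto
  have C1: "\<forall>a0 A. A \<subseteq> {1..n} \<longrightarrow>
        (is_principal m (ram_ideal m l n a0 A) \<longleftrightarrow>
           (\<not> a0 \<and> A = {}) \<or> (\<not> a0 \<and> A = {1..n}) \<or>
           (a0 \<and> A = {2}) \<or> (a0 \<and> A = {1} \<union> {3..n}))"
  proof (intro allI impI)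
    fix a0 A assume A: "A \<subseteq> {1..n}"
    show "is_principal m (ram_ideal m l n a0 A) \<longleftrightarrow>
           (\<not> a0 \<and> A = {}) \<or> (\<not> a0 \<and> A = {1..n}) \<or>
           (a0 \<and> A = {2}) \<or> (a0 \<and> A = {1} \<union> {3..n})"
    proof
      assume "is_principal m (ram_ideal m l n a0 A)"
      then have "\<exists>U V \<sigma>. (\<sigma> = 1 \<or> \<sigma> = -1) \<and> (\<Prod>i\<in>A. l i)*U^2 - (\<Prod>i\<in>{1..n}-A. l i)*V^2 = \<sigma> * (if a0 then 2 else 1)"
        by (rule iffD1[OF princ_iff[OF DL A]])
      then obtain U V \<sigma> where "\<sigma> = 1 \<or> \<sigma> = -1" "(\<Prod>i\<in>A. l i)*U^2 - (\<Prod>i\<in>{1..n}-A. l i)*V^2 = \<sigma> * (if a0 then 2 else 1)"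
        by blast
      from classify[OF DL A this] show "(\<not> a0 \<and> A = {}) \<or> (\<not> a0 \<and> A = {1..n}) \<or>
           (a0 \<and> A = {2}) \<or> (a0 \<and> A = {1} \<union> {3..n})" by blast
    next
      assume H: "(\<not> a0 \<and> A = {}) \<or> (\<not> a0 \<and> A = {1..n}) \<or>
           (a0 \<and> A = {2}) \<or> (a0 \<and> A = {1} \<union> {3..n})"
      show "is_principal m (ram_ideal m l n a0 A)"
      proof (cases a0)
        case True
        then have "A = {2} \<or> A = S" using H unfolding S_def by blast
        then show ?thesis using prboth True by (elim disjE) simp_all
      next
        case False
        then have "A = {} \<or> A = {1..n}" using H by simp
        then show ?thesis
        proof
          assume Ae: "A = {}"
          have "(\<Prod>i\<in>A. l i)*1^2 - (\<Prod>i\<in>{1..n}-A. l i)*0^2 = 1 * (if a0 then 2 else 1)"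
            using Ae False by simp
          note ee = this
          show ?thesis
            by (rule iffD2[OF princ_iff[OF DL A]], rule exI[of _ 1], rule exI[of _ 0], rule exI[of _ 1]) (use ee in simp)
        next
          assume Ae: "A = {1..n}"
          have "(\<Prod>i\<in>A. l i)*0^2 - (\<Prod>i\<in>{1..n}-A. l i)*1^2 = (-1) * (if a0 then 2 else 1)"
            using Ae False by simp
          note ee = this
          show ?thesis
            by (rule iffD2[OF princ_iff[OF DL A]], rule exI[of _ 0], rule exI[of _ 1], rule exI[of _ "-1"]) (use ee in simp)
        qed
      qed
    qed
  qed
  have C2: "\<forall>a0 A. A \<subseteq> {1..n} \<and> A \<noteq> {} \<and> A \<noteq> {1..n} \<and>
        is_principal m (ram_ideal m l n a0 A) \<longrightarrow> a0"
  proof (intro allI impI)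
    fix a0 A assume H: "A \<subseteq> {1..n} \<and> A \<noteq> {} \<and> A \<noteq> {1..n} \<and> is_principal m (ram_ideal m l n a0 A)"
    have As: "A \<subseteq> {1..n}" and Ap: "is_principal m (ram_ideal m l n a0 A)" using H by blast+
    have "(\<not> a0 \<and> A = {}) \<or> (\<not> a0 \<and> A = {1..n}) \<or> (a0 \<and> A = {2}) \<or> (a0 \<and> A = {1} \<union> {3..n})"
      using iffD1[OF C1[rule_format, OF As] Ap] .
    then show a0 using H by blast
  qed
  have C3: "ram_ideal m l n False {1..n} = pideal m (0, 1)"
  proof -
    have "Iset m m False = pideal m (m*0, 1)"
      by (rule Iset_pideal[where E=1 and \<sigma>="-1"]) (use DL_m4(2)[OF DL] in simp_all)
    then have e1: "Iset m m False = pideal m (0, 1)" by simp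
    have "ram_ideal m l n False {1..n} = Iset m (\<Prod>i\<in>{1..n}. l i) False"
      by (rule ram_eq[OF DL order_refl])
    then show ?thesis unfolding mprod e1 .
  qed
  have C4: "\<exists>s::int. (s = 1 \<or> s = -1) \<and>
        (\<exists>a1 b1. a1 \<noteq> 0 \<and> b1 \<noteq> 0 \<and>
           pideal m (b1 * (x + s), b1 * y) = ideal_prod m (pideal m (a1, 0)) (ram_ideal m l n True {2})) \<and>
        (\<exists>a2 b2. a2 \<noteq> 0 \<and> b2 \<noteq> 0 \<and>
           pideal m (b2 * (x - s), b2 * y) = ideal_prod m (pideal m (a2, 0)) (ram_ideal m l n True ({1} \<union> {3..n})))"
  proof (cases "A0 = {2}")
    case True
    then have A1S: "A1 = {1} \<union> {3..n}" using A1c cS unfolding S_def by auto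
    have rn: "r \<noteq> 0" "s \<noteq> 0" "(1::int) \<noteq> 0" using rp sp by simp_all
    have e1: "pideal m (1 * (x + 1), 1 * y) = ideal_prod m (pideal m (r, 0)) (ram_ideal m l n True {2})"
      using P0 unfolding True mult_1 .
    have e2: "pideal m (1 * (x - 1), 1 * y) = ideal_prod m (pideal m (s, 0)) (ram_ideal m l n True ({1} \<union> {3..n}))"
      using P1 unfolding A1S mult_1 .
    show ?thesis
      apply (rule exI[of _ 1], intro conjI)
        apply (rule disjI1, rule refl)
       apply (rule exI[of _ r], rule exI[of _ 1], intro conjI, rule rn(1), rule rn(3), rule e1)
      apply (rule exI[of _ s], rule exI[of _ 1], intro conjI, rule rn(2), rule rn(3), rule e2)
      done
  next
    case False
    then have A0S: "A0 = {1} \<union> {3..n}" "A1 = {2}" using A1c unfolding S_def by auto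
    have rn: "r \<noteq> 0" "s \<noteq> 0" "(1::int) \<noteq> 0" using rp sp by simp_all
    have xx: "x + -1 = x - 1" "x - -1 = x + 1" by simp_all
    have e1: "pideal m (1 * (x + -1), 1 * y) = ideal_prod m (pideal m (s, 0)) (ram_ideal m l n True {2})"
      using P1 unfolding A0S mult_1 xx .
    have e2: "pideal m (1 * (x - -1), 1 * y) = ideal_prod m (pideal m (r, 0)) (ram_ideal m l n True ({1} \<union> {3..n}))"
      using P0 unfolding A0S mult_1 xx .
    show ?thesis
      apply (rule exI[of _ "-1"], intro conjI)
        apply (rule disjI2, rule refl)
       apply (rule exI[of _ s], rule exI[of _ 1], intro conjI, rule rn(2), rule rn(3), rule e1)
      apply (rule exI[of _ r], rule exI[of _ 1], intro conjI, rule rn(1), rule rn(3), rule e2)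
      done
  qed
  have C5: "\<exists>a b :: int. odd a \<and> odd b \<and>
        (x + y * sqrt (real_of_int m) + 1) / (x + y * sqrt (real_of_int m) - 1)
          = (real_of_int a / real_of_int b) * sqrt (real_of_int m)"
  proof -
    have ors: "odd r \<and> odd s"
    proof -
      have "even (Dd*r^2 - Ee*s^2)" using eq' by simp
      then have rs: "even r \<longleftrightarrow> even s" using DE(2,3) by (simp add: even_diff)
      show ?thesis
      proof (rule ccontr)
        assume "\<not> (odd r \<and> odd s)"
        then have "even r" "even s" using rs by auto
        then obtain a b where "r = 2*a" "s = 2*b" by (auto elim!: evenE)
        then have "4*(Dd*a^2 - Ee*b^2) = 2" using eq' by (simp add: algebra_simps power2_eq_square)
        then show False by presburger
      qed
    qed
    have "(x + y * sqrt (real_of_int m) + 1) / (x + y * sqrt (real_of_int m) - 1)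
          = (real_of_int r / real_of_int (s*Ee)) * sqrt (real_of_int m)"
    proof -
      have g: "x - 1 = Ee * s^2" using x2 unfolding Ee_def A1_def .
      have g2: "Ee \<noteq> 0" "s \<noteq> 0" using DE(3) sp by auto
      show ?thesis by (rule ratio_lemma[OF x1[folded Dd_def] g yrs DE(1) DL_m4(3)[OF DL] unit_pos(2,3)[OF DL eps] g2])
    qed
    moreover have "odd (s*Ee)" using ors DE(3) by simp
    ultimately show ?thesis using ors by blast
  qed
  have C6: "\<exists>s0::int. (s0 = 1 \<or> s0 = -1) \<and>
        (\<exists>a b. a \<noteq> 0 \<and> b \<noteq> 0 \<and>
           pideal m (b * (x + s0), b * y) = ideal_prod m (pideal m (a, 0)) (ram_ideal m l n True {2}))"
    using C4 by blast
  show ?thesis using C1 C2 C3 C4 C5 C6 by (intro conjI) assumption+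
qed

end
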